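(* Let $G$ be a locally generalized radical group and let $A$ be a minimax-antifinitary $\mathbb{Z}G$-module. Suppose that $G \neq \mathbf{Coc}_{\mathbb{Z}\text{-mmx}}(G)$, $G$ is not finitely generated, and $G/\mathbf{Coc}_{\mathbb{Z}\text{-mmx}}(G)$ is finitely generated. Let $g \in G$ be such that $G = \langle g\rangle \mathbf{Coc}_{\mathbb{Z}\text{-mmx}}(G)$. If $H$ is a normal subgroup of $G$ of finite index, then $H\langle g\rangle = G$, and $G/H$ is a $p$-group, where $p = |G/\mathbf{Coc}_{\mathbb{Z}\text{-mmx}}(G)|$ (which is a prime).
   Context: An $R$-module is minimax if it has a finite series of submodules whose factors are each noetherian or artinian. For a subgroup $H$ of $G$, $C_A(H)$ is the set of elements of $A$ fixed by all of $H$. $\mathbf{Coc}_{\mathbb{Z}\text{-mmx}}(G) = \{x \in G \mid A/C_A(x) \text{ is a minimax } \mathbb{Z}\text{-module}\}$. A $\mathbb{Z}G$-module $A$ is minimax-antifinitary if $A/C_A(H)$ is a minimax $\mathbb{Z}$-module for every proper subgroup $H$ of $G$ that is not finitely generated, while $A/C_A(G)$ is not a minimax $\mathbb{Z}$-module. A group is generalized radical if it has an ascending series whose factors are locally nilpotent or locally finite; it is locally generalized radical if each finitely generated subgroup is generalized radical. *)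

theory Defs
  imports "HOL-Algebra.Algebra"
begin

definition fin_gen_subgroup :: "('a, 'b) monoid_scheme \<Rightarrow> 'a set \<Rightarrow> bool" where
  "fin_gen_subgroup G H \<longleftrightarrow> subgroup H G \<and> (\<exists>S. finite S \<and> S \<subseteq> H \<and> generate G S = H)"

definition fin_gen_group :: "('a, 'b) monoid_scheme \<Rightarrow> bool" where
  "fin_gen_group G \<longleftrightarrow> (\<exists>S. finite S \<and> S \<subseteq> carrier G \<and> generate G S = carrier G)"

definition locally_finite_group :: "('a, 'b) monoid_scheme \<Rightarrow> bool" where
  "locally_finite_group K \<longleftrightarrow>
     (\<forall>S. finite S \<and> S \<subseteq> carrier K \<longrightarrow> finite (generate K S))"

text \<open>Lower central series: gamma_1 = K (index 0 here), gamma_{i+1} = [gamma_i, K].\<close>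
fun lower_central :: "('a, 'b) monoid_scheme \<Rightarrow> nat \<Rightarrow> 'a set" where
  "lower_central K 0 = carrier K"
| "lower_central K (Suc n) =
     generate K {x \<otimes>\<^bsub>K\<^esub> y \<otimes>\<^bsub>K\<^esub> inv\<^bsub>K\<^esub> x \<otimes>\<^bsub>K\<^esub> inv\<^bsub>K\<^esub> y | x y. x \<in> lower_central K n \<and> y \<in> carrier K}"

definition nilpotent_group :: "('a, 'b) monoid_scheme \<Rightarrow> bool" where
  "nilpotent_group K \<longleftrightarrow> (\<exists>n. lower_central K n = {\<one>\<^bsub>K\<^esub>})"

definition locally_nilpotent_group :: "('a, 'b) monoid_scheme \<Rightarrow> bool" where
  "locally_nilpotent_group K \<longleftrightarrow>
     (\<forall>S. finite S \<and> S \<subseteq> carrier K \<longrightarrow> nilpotent_group (K\<lparr>carrier := generate K S\<rparr>))"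

text \<open>An ascending series of K is rendered as the set of its terms: a set of subgroups
  containing 1 and K, well-ordered by inclusion, closed under unions of nonempty subfamilies
  (continuity at limit ordinals), such that every term H other than K is normal in its
  successor term H' (the least term properly containing H).\<close>
definition generalized_radical :: "('a, 'b) monoid_scheme \<Rightarrow> bool" where
  "generalized_radical K \<longleftrightarrow>
     (\<exists>\<S>. (\<forall>H\<in>\<S>. subgroup H K) \<and> {\<one>\<^bsub>K\<^esub>} \<in> \<S> \<and> carrier K \<in> \<S>
        \<and> (\<forall>T. T \<subseteq> \<S> \<and> T \<noteq> {} \<longrightarrow> (\<exists>H\<in>T. \<forall>H'\<in>T. H \<subseteq> H'))
        \<and> (\<forall>T. T \<subseteq> \<S> \<and> T \<noteq> {} \<longrightarrow> \<Union>T \<in> \<S>)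
        \<and> (\<forall>H\<in>\<S>. H \<noteq> carrier K \<longrightarrow>
              (\<exists>H'\<in>\<S>. H \<subset> H' \<and> (\<forall>H''\<in>\<S>. H \<subset> H'' \<longrightarrow> H' \<subseteq> H'')
                 \<and> H \<lhd> (K\<lparr>carrier := H'\<rparr>)
                 \<and> (locally_nilpotent_group ((K\<lparr>carrier := H'\<rparr>) Mod H)
                    \<or> locally_finite_group ((K\<lparr>carrier := H'\<rparr>) Mod H)))))"

definition locally_generalized_radical :: "('a, 'b) monoid_scheme \<Rightarrow> bool" where
  "locally_generalized_radical G \<longleftrightarrow>
     (\<forall>S. finite S \<and> S \<subseteq> carrier G \<longrightarrow> generalized_radical (G\<lparr>carrier := generate G S\<rparr>))"

definition noetherian_group :: "('a, 'b) monoid_scheme \<Rightarrow> bool" where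
  "noetherian_group M \<longleftrightarrow>
     (\<forall>f :: nat \<Rightarrow> 'a set. (\<forall>n. subgroup (f n) M) \<and> (\<forall>n. f n \<subseteq> f (Suc n))
        \<longrightarrow> (\<exists>N. \<forall>m\<ge>N. f m = f N))"

definition artinian_group :: "('a, 'b) monoid_scheme \<Rightarrow> bool" where
  "artinian_group M \<longleftrightarrow>
     (\<forall>f :: nat \<Rightarrow> 'a set. (\<forall>n. subgroup (f n) M) \<and> (\<forall>n. f (Suc n) \<subseteq> f n)
        \<longrightarrow> (\<exists>N. \<forall>m\<ge>N. f m = f N))"

text \<open>For an abelian group M (a Z-module), Z-submodules are exactly subgroups.\<close>
definition minimax :: "('a, 'b) monoid_scheme \<Rightarrow> bool" where
  "minimax M \<longleftrightarrow>
     (\<exists>(n::nat) (S :: nat \<Rightarrow> 'a set).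
        S 0 = {\<one>\<^bsub>M\<^esub>} \<and> S n = carrier M \<and> (\<forall>i\<le>n. subgroup (S i) M)
        \<and> (\<forall>i<n. S i \<subseteq> S (Suc i)
              \<and> (noetherian_group ((M\<lparr>carrier := S (Suc i)\<rparr>) Mod S i)
                 \<or> artinian_group ((M\<lparr>carrier := S (Suc i)\<rparr>) Mod S i))))"

text \<open>A ZG-module: an abelian group A (written multiplicatively, HOL-Algebra style)
  with a left action of G by group endomorphisms.\<close>
definition ZG_module ::
  "('g, 'c) monoid_scheme \<Rightarrow> ('a, 'd) monoid_scheme \<Rightarrow> ('g \<Rightarrow> 'a \<Rightarrow> 'a) \<Rightarrow> bool" where
  "ZG_module G A act \<longleftrightarrow> group G \<and> comm_group A
     \<and> (\<forall>g\<in>carrier G. \<forall>a\<in>carrier A. act g a \<in> carrier A)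
     \<and> (\<forall>g\<in>carrier G. \<forall>a\<in>carrier A. \<forall>b\<in>carrier A.
           act g (a \<otimes>\<^bsub>A\<^esub> b) = act g a \<otimes>\<^bsub>A\<^esub> act g b)
     \<and> (\<forall>a\<in>carrier A. act \<one>\<^bsub>G\<^esub> a = a)
     \<and> (\<forall>g\<in>carrier G. \<forall>h\<in>carrier G. \<forall>a\<in>carrier A.
           act (g \<otimes>\<^bsub>G\<^esub> h) a = act g (act h a))"

definition centralizer_in_module ::
  "('a, 'd) monoid_scheme \<Rightarrow> ('g \<Rightarrow> 'a \<Rightarrow> 'a) \<Rightarrow> 'g set \<Rightarrow> 'a set" where
  "centralizer_in_module A act H = {a \<in> carrier A. \<forall>h\<in>H. act h a = a}"

definition Coc_mmx ::
  "('g, 'c) monoid_scheme \<Rightarrow> ('a, 'd) monoid_scheme \<Rightarrow> ('g \<Rightarrow> 'a \<Rightarrow> 'a) \<Rightarrow> 'g set" where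
  "Coc_mmx G A act =
     {x \<in> carrier G. minimax (A Mod centralizer_in_module A act {x})}"

definition minimax_antifinitary ::
  "('g, 'c) monoid_scheme \<Rightarrow> ('a, 'd) monoid_scheme \<Rightarrow> ('g \<Rightarrow> 'a \<Rightarrow> 'a) \<Rightarrow> bool" where
  "minimax_antifinitary G A act \<longleftrightarrow> ZG_module G A act
     \<and> (\<forall>H. subgroup H G \<and> H \<noteq> carrier G \<and> \<not> fin_gen_subgroup G H
            \<longrightarrow> minimax (A Mod centralizer_in_module A act H))
     \<and> \<not> minimax (A Mod centralizer_in_module A act (carrier G))"

end

theory Submission
  imports Defs
begin



definition noeth_between :: "('a, 'b) monoid_scheme \<Rightarrow> 'a set \<Rightarrow> 'a set \<Rightarrow> bool" where
  "noeth_between M L R \<longleftrightarrow> (\<forall>f :: nat \<Rightarrow> 'a set.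
     (\<forall>n. subgroup (f n) M \<and> L \<subseteq> f n \<and> f n \<subseteq> R) \<and> (\<forall>n. f n \<subseteq> f (Suc n))
        \<longrightarrow> (\<exists>N. \<forall>m\<ge>N. f m = f N))"

definition art_between :: "('a, 'b) monoid_scheme \<Rightarrow> 'a set \<Rightarrow> 'a set \<Rightarrow> bool" where
  "art_between M L R \<longleftrightarrow> (\<forall>f :: nat \<Rightarrow> 'a set.
     (\<forall>n. subgroup (f n) M \<and> L \<subseteq> f n \<and> f n \<subseteq> R) \<and> (\<forall>n. f (Suc n) \<subseteq> f n)
        \<longrightarrow> (\<exists>N. \<forall>m\<ge>N. f m = f N))"

lemma noetherian_iff_between:
  assumes "group M"
  shows "noetherian_group M \<longleftrightarrow> noeth_between M {\<one>\<^bsub>M\<^esub>} (carrier M)"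
  unfolding noetherian_group_def noeth_between_def
proof (intro iffI allI impI)
  fix f :: "nat \<Rightarrow> 'a set"
  assume H: "\<forall>f :: nat \<Rightarrow> 'a set. (\<forall>n. subgroup (f n) M) \<and> (\<forall>n. f n \<subseteq> f (Suc n)) \<longrightarrow> (\<exists>N. \<forall>m\<ge>N. f m = f N)"
    and f: "(\<forall>n. subgroup (f n) M \<and> {\<one>\<^bsub>M\<^esub>} \<subseteq> f n \<and> f n \<subseteq> carrier M) \<and> (\<forall>n. f n \<subseteq> f (Suc n))"
  then show "\<exists>N. \<forall>m\<ge>N. f m = f N" by auto
next
  fix f :: "nat \<Rightarrow> 'a set"
  assume H: "\<forall>f :: nat \<Rightarrow> 'a set. (\<forall>n. subgroup (f n) M \<and> {\<one>\<^bsub>M\<^esub>} \<subseteq> f n \<and> f n \<subseteq> carrier M) \<and> (\<forall>n. f n \<subseteq> f (Suc n)) \<longrightarrow> (\<exists>N. \<forall>m\<ge>N. f m = f N)"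
    and f: "(\<forall>n. subgroup (f n) M) \<and> (\<forall>n. f n \<subseteq> f (Suc n))"
  have "\<forall>n. subgroup (f n) M \<and> {\<one>\<^bsub>M\<^esub>} \<subseteq> f n \<and> f n \<subseteq> carrier M"
    using f by (simp add: subgroup.one_closed subgroup.subset)
  then show "\<exists>N. \<forall>m\<ge>N. f m = f N" using spec[OF H, of f] f by simp
qed

lemma artinian_iff_between:
  assumes "group M"
  shows "artinian_group M \<longleftrightarrow> art_between M {\<one>\<^bsub>M\<^esub>} (carrier M)"
  unfolding artinian_group_def art_between_def
proof (intro iffI allI impI)
  fix f :: "nat \<Rightarrow> 'a set"
  assume H: "\<forall>f :: nat \<Rightarrow> 'a set. (\<forall>n. subgroup (f n) M) \<and> (\<forall>n. f (Suc n) \<subseteq> f n) \<longrightarrow> (\<exists>N. \<forall>m\<ge>N. f m = f N)"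
    and f: "(\<forall>n. subgroup (f n) M \<and> {\<one>\<^bsub>M\<^esub>} \<subseteq> f n \<and> f n \<subseteq> carrier M) \<and> (\<forall>n. f (Suc n) \<subseteq> f n)"
  then show "\<exists>N. \<forall>m\<ge>N. f m = f N" by auto
next
  fix f :: "nat \<Rightarrow> 'a set"
  assume H: "\<forall>f :: nat \<Rightarrow> 'a set. (\<forall>n. subgroup (f n) M \<and> {\<one>\<^bsub>M\<^esub>} \<subseteq> f n \<and> f n \<subseteq> carrier M) \<and> (\<forall>n. f (Suc n) \<subseteq> f n) \<longrightarrow> (\<exists>N. \<forall>m\<ge>N. f m = f N)"
    and f: "(\<forall>n. subgroup (f n) M) \<and> (\<forall>n. f (Suc n) \<subseteq> f n)"
  have "\<forall>n. subgroup (f n) M \<and> {\<one>\<^bsub>M\<^esub>} \<subseteq> f n \<and> f n \<subseteq> carrier M"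
    using f by (simp add: subgroup.one_closed subgroup.subset)
  then show "\<exists>N. \<forall>m\<ge>N. f m = f N" using spec[OF H, of f] f by simp
qed

lemma noeth_transfer:
  fixes e :: "'a set \<Rightarrow> 'c set" and r :: "'c set \<Rightarrow> 'a set"
  assumes emap: "\<And>W. subgroup W K' \<Longrightarrow> U' \<subseteq> W \<Longrightarrow> W \<subseteq> V' \<Longrightarrow>
                    subgroup (e W) K \<and> U \<subseteq> e W \<and> e W \<subseteq> V \<and> r (e W) = W"
    and emono: "\<And>W1 W2. subgroup W1 K' \<Longrightarrow> U' \<subseteq> W1 \<Longrightarrow> W1 \<subseteq> V' \<Longrightarrow>
                    subgroup W2 K' \<Longrightarrow> U' \<subseteq> W2 \<Longrightarrow> W2 \<subseteq> V' \<Longrightarrow> W1 \<subseteq> W2 \<Longrightarrow> e W1 \<subseteq> e W2"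
    and nb: "noeth_between K U V"
  shows "noeth_between K' U' V'"
  unfolding noeth_between_def
proof (intro allI impI)
  fix f :: "nat \<Rightarrow> 'a set"
  assume f: "(\<forall>n. subgroup (f n) K' \<and> U' \<subseteq> f n \<and> f n \<subseteq> V') \<and> (\<forall>n. f n \<subseteq> f (Suc n))"
  have "(\<forall>n. subgroup (e (f n)) K \<and> U \<subseteq> e (f n) \<and> e (f n) \<subseteq> V) \<and> (\<forall>n. e (f n) \<subseteq> e (f (Suc n)))"
    using f by (auto simp: emap emono)
  then have "\<exists>N. \<forall>m\<ge>N. e (f m) = e (f N)"
    by (rule mp[OF spec[OF nb[unfolded noeth_between_def], of "\<lambda>n. e (f n)"]])
  then obtain N where N: "\<forall>m\<ge>N. e (f m) = e (f N)" by blast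
  show "\<exists>N. \<forall>m\<ge>N. f m = f N"
  proof (rule exI[of _ N], intro allI impI)
    fix m assume "m \<ge> N"
    then have "r (e (f m)) = r (e (f N))" using N[rule_format, of m] by simp
    moreover have "r (e (f k)) = f k" for k using emap[of "f k"] f by simp
    ultimately show "f m = f N" by metis
  qed
qed

lemma art_transfer:
  fixes e :: "'a set \<Rightarrow> 'c set" and r :: "'c set \<Rightarrow> 'a set"
  assumes emap: "\<And>W. subgroup W K' \<Longrightarrow> U' \<subseteq> W \<Longrightarrow> W \<subseteq> V' \<Longrightarrow>
                    subgroup (e W) K \<and> U \<subseteq> e W \<and> e W \<subseteq> V \<and> r (e W) = W"
    and emono: "\<And>W1 W2. subgroup W1 K' \<Longrightarrow> U' \<subseteq> W1 \<Longrightarrow> W1 \<subseteq> V' \<Longrightarrow>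
                    subgroup W2 K' \<Longrightarrow> U' \<subseteq> W2 \<Longrightarrow> W2 \<subseteq> V' \<Longrightarrow> W1 \<subseteq> W2 \<Longrightarrow> e W1 \<subseteq> e W2"
    and nb: "art_between K U V"
  shows "art_between K' U' V'"
  unfolding art_between_def
proof (intro allI impI)
  fix f :: "nat \<Rightarrow> 'a set"
  assume f: "(\<forall>n. subgroup (f n) K' \<and> U' \<subseteq> f n \<and> f n \<subseteq> V') \<and> (\<forall>n. f (Suc n) \<subseteq> f n)"
  have "(\<forall>n. subgroup (e (f n)) K \<and> U \<subseteq> e (f n) \<and> e (f n) \<subseteq> V) \<and> (\<forall>n. e (f (Suc n)) \<subseteq> e (f n))"
    using f by (auto simp: emap emono)
  then have "\<exists>N. \<forall>m\<ge>N. e (f m) = e (f N)"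
    by (rule mp[OF spec[OF nb[unfolded art_between_def], of "\<lambda>n. e (f n)"]])
  then obtain N where N: "\<forall>m\<ge>N. e (f m) = e (f N)" by blast
  show "\<exists>N. \<forall>m\<ge>N. f m = f N"
  proof (rule exI[of _ N], intro allI impI)
    fix m assume "m \<ge> N"
    then have "r (e (f m)) = r (e (f N))" using N[rule_format, of m] by simp
    moreover have "r (e (f k)) = f k" for k using emap[of "f k"] f by simp
    ultimately show "f m = f N" by metis
  qed
qed




lemma comm_group_restrict:
  assumes "comm_group Y" "subgroup V Y"
  shows "comm_group (Y\<lparr>carrier := V\<rparr>)"
proof -
  interpret Y: comm_group Y by fact
  have g: "group (Y\<lparr>carrier := V\<rparr>)" using subgroup.subgroup_is_group[OF assms(2) Y.is_group] .
  show ?thesis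
    apply (rule group.group_comm_groupI[OF g])
    using assms(2) by (simp add: Y.m_comm subgroup.mem_carrier)
qed

definition rc :: "('a, 'b) monoid_scheme \<Rightarrow> 'a set \<Rightarrow> 'a set \<Rightarrow> 'a set set" where
  "rc Y U W = (\<lambda>w. U #>\<^bsub>Y\<^esub> w) ` W"

lemma corr_a:
  assumes Y: "comm_group Y" and U: "subgroup U Y" and Wsg: "subgroup \<W> (Y Mod U)"
  shows "subgroup (\<Union>\<W>) Y \<and> U \<subseteq> \<Union>\<W> \<and> rc Y U (\<Union>\<W>) = \<W>"
proof -
  interpret Y: comm_group Y by fact
  have N: "U \<lhd> Y" using Y.subgroup_imp_normal[OF U] .
  interpret N: normal U Y by fact
  interpret W: subgroup \<W> "Y Mod U" by fact
  have Wc: "\<And>Z. Z \<in> \<W> \<Longrightarrow> \<exists>x\<in>carrier Y. Z = U #>\<^bsub>Y\<^esub> x"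
    using W.subset by (auto simp: FactGroup_def RCOSETS_def)
  have rep: "\<And>Z a. Z \<in> \<W> \<Longrightarrow> a \<in> Z \<Longrightarrow> a \<in> carrier Y \<and> Z = U #>\<^bsub>Y\<^esub> a"
  proof -
    fix Z a assume Z: "Z \<in> \<W>" and a: "a \<in> Z"
    obtain x where x: "x \<in> carrier Y" "Z = U #>\<^bsub>Y\<^esub> x" using Wc[OF Z] by blast
    have "a \<in> carrier Y" using a x Y.r_coset_subset_G[OF N.subset x(1)] by blast
    then show "a \<in> carrier Y \<and> Z = U #>\<^bsub>Y\<^esub> a"
      using Y.repr_independence[of a U x] a x U by auto
  qed
  have oneW: "U \<in> \<W>" using W.one_closed by simp
  have sub: "subgroup (\<Union>\<W>) Y"
  proof (rule Y.subgroupI)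
    show "\<Union>\<W> \<subseteq> carrier Y" using rep by blast
    show "\<Union>\<W> \<noteq> {}" using oneW N.one_closed by blast
  next
    fix a assume "a \<in> \<Union>\<W>"
    then obtain Z where Z: "Z \<in> \<W>" "a \<in> Z" by blast
    have a: "a \<in> carrier Y" "Z = U #>\<^bsub>Y\<^esub> a" using rep[OF Z] by auto
    have "inv\<^bsub>Y Mod U\<^esub> Z \<in> \<W>" using W.m_inv_closed Z(1) by simp
    moreover have "inv\<^bsub>Y Mod U\<^esub> Z = U #>\<^bsub>Y\<^esub> inv\<^bsub>Y\<^esub> a"
      using N.inv_FactGroup[of Z] W.subset Z(1) N.rcos_inv[OF a(1)] a(2) by auto
    moreover have "inv\<^bsub>Y\<^esub> a \<in> U #>\<^bsub>Y\<^esub> inv\<^bsub>Y\<^esub> a" using Y.rcos_self[OF _ U] a by simp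
    ultimately show "inv\<^bsub>Y\<^esub> a \<in> \<Union>\<W>" by auto
  next
    fix a b assume "a \<in> \<Union>\<W>" "b \<in> \<Union>\<W>"
    then obtain Z1 Z2 where Z: "Z1 \<in> \<W>" "a \<in> Z1" "Z2 \<in> \<W>" "b \<in> Z2" by blast
    have a: "a \<in> carrier Y" "Z1 = U #>\<^bsub>Y\<^esub> a" using rep[OF Z(1,2)] by auto
    have b: "b \<in> carrier Y" "Z2 = U #>\<^bsub>Y\<^esub> b" using rep[OF Z(3,4)] by auto
    have "Z1 \<otimes>\<^bsub>Y Mod U\<^esub> Z2 \<in> \<W>" using W.m_closed Z(1,3) by simp
    moreover have "Z1 \<otimes>\<^bsub>Y Mod U\<^esub> Z2 = U #>\<^bsub>Y\<^esub> (a \<otimes>\<^bsub>Y\<^esub> b)"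
      using a b N.rcos_sum by simp
    moreover have "a \<otimes>\<^bsub>Y\<^esub> b \<in> U #>\<^bsub>Y\<^esub> (a \<otimes>\<^bsub>Y\<^esub> b)" using Y.rcos_self[OF _ U] a b by simp
    ultimately show "a \<otimes>\<^bsub>Y\<^esub> b \<in> \<Union>\<W>" by auto
  qed
  have rcW: "rc Y U (\<Union>\<W>) = \<W>"
  proof
    show "rc Y U (\<Union>\<W>) \<subseteq> \<W>"
    proof
      fix Z assume "Z \<in> rc Y U (\<Union>\<W>)"
      then obtain w Z0 where "Z0 \<in> \<W>" "w \<in> Z0" "Z = U #>\<^bsub>Y\<^esub> w" unfolding rc_def by blast
      then show "Z \<in> \<W>" using rep by metis
    qed
    show "\<W> \<subseteq> rc Y U (\<Union>\<W>)"
    proof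
      fix Z assume Z: "Z \<in> \<W>"
      obtain x where x: "x \<in> carrier Y" "Z = U #>\<^bsub>Y\<^esub> x" using Wc[OF Z] by blast
      have "x \<in> Z" using x Y.rcos_self[OF _ U] by simp
      then show "Z \<in> rc Y U (\<Union>\<W>)" unfolding rc_def using Z x by blast
    qed
  qed
  show ?thesis using sub rcW oneW by blast
qed

lemma corr_b:
  assumes Y: "comm_group Y" and U: "subgroup U Y" and W: "subgroup W Y" and UW: "U \<subseteq> W"
  shows "subgroup (rc Y U W) (Y Mod U) \<and> \<Union>(rc Y U W) = W"
proof -
  interpret Y: comm_group Y by fact
  have N: "U \<lhd> Y" using Y.subgroup_imp_normal[OF U] .
  interpret N: normal U Y by fact
  interpret W: subgroup W Y by fact
  interpret Q: group "Y Mod U" using N.factorgroup_is_group .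
  have sub: "subgroup (rc Y U W) (Y Mod U)"
  proof (rule Q.subgroupI)
    show "rc Y U W \<subseteq> carrier (Y Mod U)"
      unfolding rc_def using W.subset by (auto simp: FactGroup_def RCOSETS_def)
    show "rc Y U W \<noteq> {}" unfolding rc_def using W.one_closed by blast
  next
    fix Z assume "Z \<in> rc Y U W"
    then obtain a where a: "a \<in> W" "Z = U #>\<^bsub>Y\<^esub> a" unfolding rc_def by blast
    have "inv\<^bsub>Y Mod U\<^esub> Z = U #>\<^bsub>Y\<^esub> inv\<^bsub>Y\<^esub> a"
    proof -
      have ac: "a \<in> carrier Y" using a(1) W.mem_carrier by blast
      have "Z \<in> carrier (Y Mod U)" using a ac by (auto simp: FactGroup_def RCOSETS_def)
      then have "inv\<^bsub>Y Mod U\<^esub> Z = set_inv\<^bsub>Y\<^esub> Z" by (rule N.inv_FactGroup)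
      then show ?thesis using N.rcos_inv[OF ac] a(2) by simp
    qed
    then show "inv\<^bsub>Y Mod U\<^esub> Z \<in> rc Y U W" unfolding rc_def using a by auto
  next
    fix Z1 Z2 assume "Z1 \<in> rc Y U W" "Z2 \<in> rc Y U W"
    then obtain a b where ab: "a \<in> W" "Z1 = U #>\<^bsub>Y\<^esub> a" "b \<in> W" "Z2 = U #>\<^bsub>Y\<^esub> b"
      unfolding rc_def by blast
    have "Z1 \<otimes>\<^bsub>Y Mod U\<^esub> Z2 = U #>\<^bsub>Y\<^esub> (a \<otimes>\<^bsub>Y\<^esub> b)"
      using ab N.rcos_sum by simp
    then show "Z1 \<otimes>\<^bsub>Y Mod U\<^esub> Z2 \<in> rc Y U W" unfolding rc_def using ab by auto
  qed
  have un: "\<Union>(rc Y U W) = W"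
  proof
    show "\<Union>(rc Y U W) \<subseteq> W"
    proof
      fix x assume "x \<in> \<Union>(rc Y U W)"
      then obtain w where w: "w \<in> W" "x \<in> U #>\<^bsub>Y\<^esub> w" unfolding rc_def by blast
      then obtain u where "u \<in> U" "x = u \<otimes>\<^bsub>Y\<^esub> w" unfolding r_coset_def by blast
      then show "x \<in> W" using UW w W.m_closed by blast
    qed
    show "W \<subseteq> \<Union>(rc Y U W)"
    proof
      fix w assume w: "w \<in> W"
      then have "w \<in> U #>\<^bsub>Y\<^esub> w" using Y.rcos_self[OF _ U] W.mem_carrier by blast
      moreover have "U #>\<^bsub>Y\<^esub> w \<in> rc Y U W" unfolding rc_def using w by blast
      ultimately show "w \<in> \<Union>(rc Y U W)" by blast
    qed
  qed
  show ?thesis using sub un by blast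
qed




lemma rcosets_union:
  assumes "group Y" "subgroup U Y"
  shows "\<Union>(carrier (Y Mod U)) = carrier Y"
  using group.rcosets_part_G[OF assms(1) assms(2)] by (simp add: FactGroup_def)

lemma NQ_noeth:
  assumes Z: "comm_group Z" and U: "subgroup U Z"
    and S1: "subgroup S1 (Z Mod U)" and S2: "subgroup S2 (Z Mod U)" and S12: "S1 \<subseteq> S2"
  shows "noeth_between (Z Mod U) S1 S2 \<longleftrightarrow> noeth_between Z (\<Union>S1) (\<Union>S2)"
    and "art_between (Z Mod U) S1 S2 \<longleftrightarrow> art_between Z (\<Union>S1) (\<Union>S2)"
proof -
  have a1: "subgroup (\<Union>S1) Z" "U \<subseteq> \<Union>S1" "rc Z U (\<Union>S1) = S1" using corr_a[OF Z U S1] by auto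
  have a2: "subgroup (\<Union>S2) Z" "U \<subseteq> \<Union>S2" "rc Z U (\<Union>S2) = S2" using corr_a[OF Z U S2] by auto
  have e1: "subgroup (rc Z U W) (Z Mod U) \<and> S1 \<subseteq> rc Z U W \<and> rc Z U W \<subseteq> S2 \<and> \<Union>(rc Z U W) = W"
    if "subgroup W Z" "\<Union>S1 \<subseteq> W" "W \<subseteq> \<Union>S2" for W
  proof -
    have "U \<subseteq> W" using a1 that by blast
    then have b: "subgroup (rc Z U W) (Z Mod U) \<and> \<Union>(rc Z U W) = W" using corr_b[OF Z U that(1)] by blast
    have "rc Z U (\<Union>S1) \<subseteq> rc Z U W" "rc Z U W \<subseteq> rc Z U (\<Union>S2)" unfolding rc_def using that by auto
    then show ?thesis using b a1 a2 by simp
  qed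
  have m1: "rc Z U W1 \<subseteq> rc Z U W2" if "W1 \<subseteq> W2" for W1 W2 unfolding rc_def using that by auto
  have e2: "subgroup (\<Union>W) Z \<and> \<Union>S1 \<subseteq> \<Union>W \<and> \<Union>W \<subseteq> \<Union>S2 \<and> rc Z U (\<Union>W) = W"
    if "subgroup W (Z Mod U)" "S1 \<subseteq> W" "W \<subseteq> S2" for W
    using corr_a[OF Z U that(1)] that(2,3) by blast
  show "noeth_between (Z Mod U) S1 S2 \<longleftrightarrow> noeth_between Z (\<Union>S1) (\<Union>S2)"
  proof
    assume H: "noeth_between (Z Mod U) S1 S2"
    show "noeth_between Z (\<Union>S1) (\<Union>S2)"
      apply (rule noeth_transfer[where e="rc Z U" and r=Union])
        apply (rule e1; assumption)
       apply (rule m1; assumption)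
      by (rule H)
  next
    assume H: "noeth_between Z (\<Union>S1) (\<Union>S2)"
    show "noeth_between (Z Mod U) S1 S2"
      apply (rule noeth_transfer[where e=Union and r="rc Z U"])
        apply (rule e2; assumption)
       apply blast
      by (rule H)
  qed
  show "art_between (Z Mod U) S1 S2 \<longleftrightarrow> art_between Z (\<Union>S1) (\<Union>S2)"
  proof
    assume H: "art_between (Z Mod U) S1 S2"
    show "art_between Z (\<Union>S1) (\<Union>S2)"
      apply (rule art_transfer[where e="rc Z U" and r=Union])
        apply (rule e1; assumption)
       apply (rule m1; assumption)
      by (rule H)
  next
    assume H: "art_between Z (\<Union>S1) (\<Union>S2)"
    show "art_between (Z Mod U) S1 S2"
      apply (rule art_transfer[where e=Union and r="rc Z U"])
        apply (rule e2; assumption)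
       apply blast
      by (rule H)
  qed
qed

lemma restrict_between:
  assumes Y: "group Y" and V: "subgroup V Y"
  shows "noeth_between (Y\<lparr>carrier := V\<rparr>) U V \<longleftrightarrow> noeth_between Y U V"
    and "art_between (Y\<lparr>carrier := V\<rparr>) U V \<longleftrightarrow> art_between Y U V"
proof -
  have eq: "subgroup W (Y\<lparr>carrier := V\<rparr>) \<longleftrightarrow> subgroup W Y" if "W \<subseteq> V" for W
    using group.subgroup_incl[OF Y _ V that] group.incl_subgroup[OF Y V] by blast
  show "noeth_between (Y\<lparr>carrier := V\<rparr>) U V \<longleftrightarrow> noeth_between Y U V"
  proof
    assume H: "noeth_between (Y\<lparr>carrier := V\<rparr>) U V"
    show "noeth_between Y U V"
      apply (rule noeth_transfer[where e=id and r=id and K="Y\<lparr>carrier := V\<rparr>" and U=U and V=V])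
        apply (simp add: eq)
       apply simp
      by (rule H)
  next
    assume H: "noeth_between Y U V"
    show "noeth_between (Y\<lparr>carrier := V\<rparr>) U V"
      apply (rule noeth_transfer[where e=id and r=id and K=Y and U=U and V=V])
        apply (simp add: eq)
       apply simp
      by (rule H)
  qed
  show "art_between (Y\<lparr>carrier := V\<rparr>) U V \<longleftrightarrow> art_between Y U V"
  proof
    assume H: "art_between (Y\<lparr>carrier := V\<rparr>) U V"
    show "art_between Y U V"
      apply (rule art_transfer[where e=id and r=id and K="Y\<lparr>carrier := V\<rparr>" and U=U and V=V])
        apply (simp add: eq)
       apply simp
      by (rule H)
  next
    assume H: "art_between Y U V"
    show "art_between (Y\<lparr>carrier := V\<rparr>) U V"
      apply (rule art_transfer[where e=id and r=id and K=Y and U=U and V=V])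
        apply (simp add: eq)
       apply simp
      by (rule H)
  qed
qed

lemma factor_chain:
  assumes Y: "comm_group Y" and U: "subgroup U Y" and V: "subgroup V Y" and UV: "U \<subseteq> V"
  shows "noetherian_group ((Y\<lparr>carrier := V\<rparr>) Mod U) \<longleftrightarrow> noeth_between Y U V"
    and "artinian_group ((Y\<lparr>carrier := V\<rparr>) Mod U) \<longleftrightarrow> art_between Y U V"
proof -
  interpret Y: comm_group Y by fact
  let ?Z = "Y\<lparr>carrier := V\<rparr>"
  have Z: "comm_group ?Z" using comm_group_restrict[OF Y V] .
  have UZ: "subgroup U ?Z" using Y.subgroup_incl[OF U V UV] .
  have N: "U \<lhd> ?Z" using comm_group.subgroup_imp_normal[OF Z UZ] .
  have Qg: "group (?Z Mod U)" using normal.factorgroup_is_group[OF N] .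
  have S1: "subgroup {U} (?Z Mod U)" using group.one_is_normal[OF Qg] normal_imp_subgroup by fastforce
  have S2: "subgroup (carrier (?Z Mod U)) (?Z Mod U)" using group.subgroup_self[OF Qg] .
  have u2: "\<Union>(carrier (?Z Mod U)) = V" using rcosets_union[OF comm_group.axioms(2)[OF Z] UZ] by simp
  have S12: "{U} \<subseteq> carrier (?Z Mod U)" using subgroup.one_closed[OF S1] S2 subgroup.subset[OF S1] by blast
  show "noetherian_group (?Z Mod U) \<longleftrightarrow> noeth_between Y U V"
    using noetherian_iff_between[OF Qg] NQ_noeth(1)[OF Z UZ S1 S2 S12] u2 restrict_between(1)[OF Y.is_group V]
    by simp
  show "artinian_group (?Z Mod U) \<longleftrightarrow> art_between Y U V"
    using artinian_iff_between[OF Qg] NQ_noeth(2)[OF Z UZ S1 S2 S12] u2 restrict_between(2)[OF Y.is_group V]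
    by simp
qed




definition mchain :: "('a, 'b) monoid_scheme \<Rightarrow> 'a set \<Rightarrow> bool" where
  "mchain A B \<longleftrightarrow> (\<exists>(n::nat) (T :: nat \<Rightarrow> 'a set).
     T 0 = B \<and> T n = carrier A \<and> (\<forall>i\<le>n. subgroup (T i) A)
     \<and> (\<forall>i<n. T i \<subseteq> T (Suc i) \<and> (noeth_between A (T i) (T (Suc i)) \<or> art_between A (T i) (T (Suc i)))))"

lemma chain_lower:
  assumes "T 0 = B" "\<forall>i<n. T i \<subseteq> T (Suc i)"
  shows "i \<le> n \<Longrightarrow> B \<subseteq> T i"
proof (induction i)
  case 0 then show ?case using assms by simp
next
  case (Suc i) then show ?case using assms(2) by (meson Suc_le_lessD dual_order.trans less_imp_le_nat)
qed

lemma minimax_iff_mchain: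
  assumes A: "comm_group A" and B: "subgroup B A"
  shows "minimax (A Mod B) \<longleftrightarrow> mchain A B"
proof -
  interpret A: comm_group A by fact
  let ?M = "A Mod B"
  have M: "comm_group ?M" using A.abelian_FactGroup[OF B] .
  have Mg: "group ?M" using M comm_group.axioms(2) by blast
  have fac: "(noetherian_group ((?M\<lparr>carrier := S2\<rparr>) Mod S1) \<or> artinian_group ((?M\<lparr>carrier := S2\<rparr>) Mod S1))
      \<longleftrightarrow> (noeth_between A (\<Union>S1) (\<Union>S2) \<or> art_between A (\<Union>S1) (\<Union>S2))"
    if "subgroup S1 ?M" "subgroup S2 ?M" "S1 \<subseteq> S2" for S1 S2
    using factor_chain[OF M that] NQ_noeth[OF A B that] by simp
  show ?thesis
  proof
    assume "minimax ?M"
    then obtain n S where S: "S 0 = {\<one>\<^bsub>?M\<^esub>}" "S n = carrier ?M" "\<forall>i\<le>n. subgroup (S i) ?M"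
      "\<forall>i<n. S i \<subseteq> S (Suc i) \<and> (noetherian_group ((?M\<lparr>carrier := S (Suc i)\<rparr>) Mod S i)
                 \<or> artinian_group ((?M\<lparr>carrier := S (Suc i)\<rparr>) Mod S i))"
      unfolding minimax_def by blast
    define T where "T i = \<Union>(S i)" for i
    have "T 0 = B" using S(1) by (simp add: T_def)
    moreover have "T n = carrier A" using S(2) rcosets_union[OF A.is_group B] by (simp add: T_def)
    moreover have "\<forall>i\<le>n. subgroup (T i) A" using S(3) corr_a[OF A B] by (simp add: T_def)
    moreover have "\<forall>i<n. T i \<subseteq> T (Suc i) \<and> (noeth_between A (T i) (T (Suc i)) \<or> art_between A (T i) (T (Suc i)))"
    proof (intro allI impI)
      fix i assume i: "i < n"
      have s: "subgroup (S i) ?M" "subgroup (S (Suc i)) ?M" "S i \<subseteq> S (Suc i)" using S(3,4) i by auto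
      show "T i \<subseteq> T (Suc i) \<and> (noeth_between A (T i) (T (Suc i)) \<or> art_between A (T i) (T (Suc i)))"
        using fac[OF s] S(4) i s(3) unfolding T_def by blast
    qed
    ultimately show "mchain A B" unfolding mchain_def by blast
  next
    assume "mchain A B"
    then obtain n T where T: "T 0 = B" "T n = carrier A" "\<forall>i\<le>n. subgroup (T i) A"
      "\<forall>i<n. T i \<subseteq> T (Suc i) \<and> (noeth_between A (T i) (T (Suc i)) \<or> art_between A (T i) (T (Suc i)))"
      unfolding mchain_def by blast
    have low: "i \<le> n \<Longrightarrow> B \<subseteq> T i" for i using chain_lower[of T B n i] T(1,4) by blast
    define S where "S i = rc A B (T i)" for i
    have cb: "subgroup (S i) ?M \<and> \<Union>(S i) = T i" if "i \<le> n" for i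
      using corr_b[OF A B _ low[OF that]] T(3) that unfolding S_def by blast
    have "S 0 = {\<one>\<^bsub>?M\<^esub>}"
    proof -
      have "B #>\<^bsub>A\<^esub> b = B" if "b \<in> B" for b
        using A.coset_join2[OF _ B that] subgroup.mem_carrier[OF B that] by blast
      then show ?thesis using subgroup.one_closed[OF B] unfolding S_def rc_def T(1) by auto
    qed
    moreover have "S n = carrier ?M" unfolding S_def rc_def T(2) by (auto simp: FactGroup_def RCOSETS_def)
    moreover have "\<forall>i\<le>n. subgroup (S i) ?M" using cb by blast
    moreover have "\<forall>i<n. S i \<subseteq> S (Suc i) \<and> (noetherian_group ((?M\<lparr>carrier := S (Suc i)\<rparr>) Mod S i)
                 \<or> artinian_group ((?M\<lparr>carrier := S (Suc i)\<rparr>) Mod S i))"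
    proof (intro allI impI)
      fix i assume i: "i < n"
      have sub: "S i \<subseteq> S (Suc i)" using T(4) i unfolding S_def rc_def by auto
      have c1: "subgroup (S i) ?M \<and> \<Union>(S i) = T i" using cb i by simp
      have c2: "subgroup (S (Suc i)) ?M \<and> \<Union>(S (Suc i)) = T (Suc i)" using cb i by simp
      show "S i \<subseteq> S (Suc i) \<and> (noetherian_group ((?M\<lparr>carrier := S (Suc i)\<rparr>) Mod S i)
                 \<or> artinian_group ((?M\<lparr>carrier := S (Suc i)\<rparr>) Mod S i))"
        using fac[of "S i" "S (Suc i)"] c1 c2 sub T(4) i by simp
    qed
    ultimately show "minimax ?M" unfolding minimax_def by blast
  qed
qed




lemma set_mult_mem: "a \<in> H \<Longrightarrow> b \<in> K \<Longrightarrow> a \<otimes>\<^bsub>G\<^esub> b \<in> H <#>\<^bsub>G\<^esub> K"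
  unfolding set_mult_def by blast

lemma set_mult_memE: "x \<in> H <#>\<^bsub>G\<^esub> K \<Longrightarrow> (\<And>a b. a \<in> H \<Longrightarrow> b \<in> K \<Longrightarrow> x = a \<otimes>\<^bsub>G\<^esub> b \<Longrightarrow> P) \<Longrightarrow> P"
  unfolding set_mult_def by blast

lemma img_interval:
  assumes A: "comm_group A" and h: "\<phi> \<in> hom A A" and B': "subgroup B' A"
    and T1: "subgroup T1 A" and T2: "subgroup T2 A" and T12: "T1 \<subseteq> T2"
  shows "noeth_between A T1 T2 \<Longrightarrow> noeth_between A (\<phi> ` T1 <#>\<^bsub>A\<^esub> B') (\<phi> ` T2 <#>\<^bsub>A\<^esub> B')"
    and "art_between A T1 T2 \<Longrightarrow> art_between A (\<phi> ` T1 <#>\<^bsub>A\<^esub> B') (\<phi> ` T2 <#>\<^bsub>A\<^esub> B')"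
proof -
  interpret A: comm_group A by fact
  interpret gh: group_hom A A \<phi> using h A.is_group by (simp add: group_hom_def group_hom_axioms_def)
  let ?L = "\<phi> ` T1 <#>\<^bsub>A\<^esub> B'" and ?R = "\<phi> ` T2 <#>\<^bsub>A\<^esub> B'"
  define e where "e W = {x \<in> T2. \<phi> x \<in> W}" for W
  define r where "r Y = \<phi> ` Y <#>\<^bsub>A\<^esub> B'" for Y
  have T2c: "T2 \<subseteq> carrier A" using T2 subgroup.subset by blast
  have phic: "\<phi> x \<in> carrier A" if "x \<in> T2" for x using T2c that gh.hom_closed by blast
  have B'L: "B' \<subseteq> ?L"
  proof
    fix b assume b: "b \<in> B'"
    have "\<phi> \<one>\<^bsub>A\<^esub> \<otimes>\<^bsub>A\<^esub> b \<in> ?L" by (rule set_mult_mem[OF imageI[OF subgroup.one_closed[OF T1]] b])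
    then show "b \<in> ?L" using b subgroup.mem_carrier[OF B'] by simp
  qed
  have phiL: "\<phi> t \<in> ?L" if "t \<in> T1" for t
  proof -
    have "\<phi> t \<otimes>\<^bsub>A\<^esub> \<one>\<^bsub>A\<^esub> \<in> ?L" by (rule set_mult_mem) (use subgroup.one_closed[OF B'] that in auto)
    then show ?thesis using that T12 phic by auto
  qed
  have emap: "subgroup (e W) A \<and> T1 \<subseteq> e W \<and> e W \<subseteq> T2 \<and> r (e W) = W"
    if W: "subgroup W A" "?L \<subseteq> W" "W \<subseteq> ?R" for W
  proof -
    interpret W: subgroup W A by fact
    have sg: "subgroup (e W) A"
    proof (rule A.subgroupI)
      show "e W \<subseteq> carrier A" unfolding e_def using T2c by blast
      show "e W \<noteq> {}" unfolding e_def using subgroup.one_closed[OF T2] W.one_closed by auto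
    next
      fix a assume "a \<in> e W"
      then show "inv\<^bsub>A\<^esub> a \<in> e W" unfolding e_def
        using subgroup.m_inv_closed[OF T2] W.m_inv_closed T2c by auto
    next
      fix a b assume "a \<in> e W" "b \<in> e W"
      then show "a \<otimes>\<^bsub>A\<^esub> b \<in> e W" unfolding e_def
        using subgroup.m_closed[OF T2] W.m_closed T2c by (auto simp: gh.hom_mult subset_iff)
    qed
    have low: "T1 \<subseteq> e W" unfolding e_def using T12 phiL W(2) by blast
    have "r (e W) \<subseteq> W"
    proof
      fix x assume "x \<in> r (e W)"
      then obtain a b where ab: "a \<in> \<phi> ` (e W)" "b \<in> B'" "x = a \<otimes>\<^bsub>A\<^esub> b"
        unfolding r_def by (rule set_mult_memE)
      have "a \<in> W" using ab(1) unfolding e_def by auto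
      moreover have "b \<in> W" using ab(2) B'L W(2) by blast
      ultimately show "x \<in> W" using ab(3) W.m_closed by simp
    qed
    moreover have "W \<subseteq> r (e W)"
    proof
      fix w assume w: "w \<in> W"
      then have "w \<in> ?R" using W(3) by blast
      then obtain a b where ab: "a \<in> \<phi> ` T2" "b \<in> B'" "w = a \<otimes>\<^bsub>A\<^esub> b" by (rule set_mult_memE)
      obtain t where t: "t \<in> T2" "a = \<phi> t" using ab(1) by blast
      have bc: "b \<in> carrier A" using ab(2) subgroup.mem_carrier[OF B'] by blast
      have ac: "a \<in> carrier A" using t phic by simp
      have "b \<in> W" using ab(2) B'L W(2) by blast
      then have "inv\<^bsub>A\<^esub> b \<in> W" using W.m_inv_closed by simp
      then have "w \<otimes>\<^bsub>A\<^esub> inv\<^bsub>A\<^esub> b \<in> W" using w W.m_closed by simp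
      moreover have "w \<otimes>\<^bsub>A\<^esub> inv\<^bsub>A\<^esub> b = a" using ab(3) ac bc by (simp add: A.m_assoc)
      ultimately have "t \<in> e W" unfolding e_def using t by simp
      then show "w \<in> r (e W)" unfolding r_def ab(3) t(2) by (rule set_mult_mem[OF imageI ab(2)])
    qed
    ultimately show ?thesis using sg low unfolding e_def by auto
  qed
  have emono: "e W1 \<subseteq> e W2" if "W1 \<subseteq> W2" for W1 W2 unfolding e_def using that by auto
  show "noeth_between A T1 T2 \<Longrightarrow> noeth_between A ?L ?R"
    apply (rule noeth_transfer[where e=e and r=r and K=A and U=T1 and V=T2])
      apply (rule emap; assumption)
     apply (rule emono; assumption)
    by assumption
  show "art_between A T1 T2 \<Longrightarrow> art_between A ?L ?R"
    apply (rule art_transfer[where e=e and r=r and K=A and U=T1 and V=T2])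
      apply (rule emap; assumption)
     apply (rule emono; assumption)
    by assumption
qed

lemma mchain_img:
  assumes A: "comm_group A" and h: "\<phi> \<in> hom A A" and surj: "\<phi> ` carrier A = carrier A"
    and B': "subgroup B' A" and BB: "\<phi> ` B \<subseteq> B'" and mc: "mchain A B"
  shows "mchain A B'"
proof -
  interpret A: comm_group A by fact
  interpret gh: group_hom A A \<phi> using h A.is_group by (simp add: group_hom_def group_hom_axioms_def)
  obtain n T where T: "T 0 = B" "T n = carrier A" "\<forall>i\<le>n. subgroup (T i) A"
      "\<forall>i<n. T i \<subseteq> T (Suc i) \<and> (noeth_between A (T i) (T (Suc i)) \<or> art_between A (T i) (T (Suc i)))"
    using mc unfolding mchain_def by blast
  define T' where "T' i = \<phi> ` T i <#>\<^bsub>A\<^esub> B'" for i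
  have B'c: "B' \<subseteq> carrier A" using B' subgroup.subset by blast
  have oB: "\<one>\<^bsub>A\<^esub> \<in> B" using subgroup.one_closed[of "T 0" A] T(1) T(3)[rule_format, of 0] by simp
  have "T' 0 = B'"
  proof
    show "T' 0 \<subseteq> B'"
    proof
      fix x assume "x \<in> T' 0"
      then obtain a b where ab: "a \<in> \<phi> ` B" "b \<in> B'" "x = a \<otimes>\<^bsub>A\<^esub> b"
        unfolding T'_def T(1) by (rule set_mult_memE)
      then show "x \<in> B'" using BB subgroup.m_closed[OF B'] by blast
    qed
    show "B' \<subseteq> T' 0"
    proof
      fix b assume b: "b \<in> B'"
      have "\<phi> \<one>\<^bsub>A\<^esub> \<otimes>\<^bsub>A\<^esub> b \<in> T' 0" unfolding T'_def
        using T(1) oB by (intro set_mult_mem[OF imageI b]) simp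
      then show "b \<in> T' 0" using b B'c by auto
    qed
  qed
  moreover have "T' n = carrier A"
  proof
    show "T' n \<subseteq> carrier A"
    proof
      fix x assume "x \<in> T' n"
      then obtain a b where ab: "a \<in> carrier A" "b \<in> B'" "x = a \<otimes>\<^bsub>A\<^esub> b"
        unfolding T'_def T(2) surj by (rule set_mult_memE)
      then show "x \<in> carrier A" using B'c by blast
    qed
    show "carrier A \<subseteq> T' n"
    proof
      fix x assume x: "x \<in> carrier A"
      have "x \<otimes>\<^bsub>A\<^esub> \<one>\<^bsub>A\<^esub> \<in> T' n" unfolding T'_def T(2) surj
        by (rule set_mult_mem) (use x subgroup.one_closed[OF B'] in auto)
      then show "x \<in> T' n" using x by simp
    qed
  qed
  moreover have "\<forall>i\<le>n. subgroup (T' i) A"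
    unfolding T'_def using T(3) gh.subgroup_img_is_subgroup A.mult_subgroups B' by blast
  moreover have "\<forall>i<n. T' i \<subseteq> T' (Suc i) \<and> (noeth_between A (T' i) (T' (Suc i)) \<or> art_between A (T' i) (T' (Suc i)))"
  proof (intro allI impI)
    fix i assume i: "i < n"
    have s: "subgroup (T i) A" "subgroup (T (Suc i)) A" "T i \<subseteq> T (Suc i)" using T(3,4) i by auto
    have "T' i \<subseteq> T' (Suc i)" unfolding T'_def using s(3) by (intro mono_set_mult) auto
    then show "T' i \<subseteq> T' (Suc i) \<and> (noeth_between A (T' i) (T' (Suc i)) \<or> art_between A (T' i) (T' (Suc i)))"
      using img_interval[OF A h B' s] T(4) i unfolding T'_def by blast
  qed
  ultimately show ?thesis unfolding mchain_def by blast
qed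

lemma int_interval:
  assumes A: "comm_group A" and B1: "subgroup B1 A"
    and T1: "subgroup T1 A" and T2: "subgroup T2 A" and T12: "T1 \<subseteq> T2"
  shows "noeth_between A T1 T2 \<Longrightarrow> noeth_between A (B1 \<inter> T1) (B1 \<inter> T2)"
    and "art_between A T1 T2 \<Longrightarrow> art_between A (B1 \<inter> T1) (B1 \<inter> T2)"
proof -
  interpret A: comm_group A by fact
  define e where "e W = W <#>\<^bsub>A\<^esub> T1" for W
  define r where "r Y = Y \<inter> B1" for Y
  have emap: "subgroup (e W) A \<and> T1 \<subseteq> e W \<and> e W \<subseteq> T2 \<and> r (e W) = W"
    if W: "subgroup W A" "B1 \<inter> T1 \<subseteq> W" "W \<subseteq> B1 \<inter> T2" for W
  proof -
    interpret W: subgroup W A by fact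
    have sg: "subgroup (e W) A" unfolding e_def using A.mult_subgroups[OF W(1) T1] .
    have low: "T1 \<subseteq> e W"
    proof
      fix t assume t: "t \<in> T1"
      have "\<one>\<^bsub>A\<^esub> \<otimes>\<^bsub>A\<^esub> t \<in> e W" unfolding e_def by (rule set_mult_mem) (use t W.one_closed in auto)
      then show "t \<in> e W" using t subgroup.mem_carrier[OF T1] by simp
    qed
    have up: "e W \<subseteq> T2"
    proof
      fix x assume "x \<in> e W"
      then obtain a b where ab: "a \<in> W" "b \<in> T1" "x = a \<otimes>\<^bsub>A\<^esub> b"
        unfolding e_def by (rule set_mult_memE)
      then show "x \<in> T2" using W(3) T12 subgroup.m_closed[OF T2] by blast
    qed
    have "r (e W) \<subseteq> W"
    proof
      fix x assume "x \<in> r (e W)"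
      then have x: "x \<in> W <#>\<^bsub>A\<^esub> T1" "x \<in> B1" unfolding r_def e_def by auto
      obtain a b where ab: "a \<in> W" "b \<in> T1" "x = a \<otimes>\<^bsub>A\<^esub> b" using x(1) by (rule set_mult_memE)
      have ac: "a \<in> carrier A" "b \<in> carrier A" using ab W.mem_carrier subgroup.mem_carrier[OF T1] by auto
      have "a \<in> B1" using ab(1) W(3) by blast
      then have "inv\<^bsub>A\<^esub> a \<otimes>\<^bsub>A\<^esub> x \<in> B1" using x(2) subgroup.m_inv_closed[OF B1] subgroup.m_closed[OF B1] by blast
      moreover have "inv\<^bsub>A\<^esub> a \<otimes>\<^bsub>A\<^esub> x = b" using ab(3) ac by (simp add: A.m_assoc[symmetric])
      ultimately have "b \<in> W" using ab(2) W(2) by blast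
      then show "x \<in> W" using ab W.m_closed by simp
    qed
    moreover have "W \<subseteq> r (e W)"
    proof
      fix w assume w: "w \<in> W"
      have "w \<otimes>\<^bsub>A\<^esub> \<one>\<^bsub>A\<^esub> \<in> e W" unfolding e_def by (rule set_mult_mem) (use w subgroup.one_closed[OF T1] in auto)
      then show "w \<in> r (e W)" unfolding r_def using w W(3) W.mem_carrier by auto
    qed
    ultimately show ?thesis using sg low up by auto
  qed
  have emono: "e W1 \<subseteq> e W2" if "W1 \<subseteq> W2" for W1 W2 unfolding e_def using that by (intro mono_set_mult) auto
  show "noeth_between A T1 T2 \<Longrightarrow> noeth_between A (B1 \<inter> T1) (B1 \<inter> T2)"
    apply (rule noeth_transfer[where e=e and r=r and K=A and U=T1 and V=T2])
      apply (rule emap; assumption)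
     apply (rule emono; assumption)
    by assumption
  show "art_between A T1 T2 \<Longrightarrow> art_between A (B1 \<inter> T1) (B1 \<inter> T2)"
    apply (rule art_transfer[where e=e and r=r and K=A and U=T1 and V=T2])
      apply (rule emap; assumption)
     apply (rule emono; assumption)
    by assumption
qed

lemma mchain_int:
  assumes A: "comm_group A" and B1: "subgroup B1 A" and m1: "mchain A B1" and m2: "mchain A B2"
  shows "mchain A (B1 \<inter> B2)"
proof -
  interpret A: comm_group A by fact
  obtain n1 T1 where T1: "T1 0 = B1" "T1 n1 = carrier A" "\<forall>i\<le>n1. subgroup (T1 i) A"
      "\<forall>i<n1. T1 i \<subseteq> T1 (Suc i) \<and> (noeth_between A (T1 i) (T1 (Suc i)) \<or> art_between A (T1 i) (T1 (Suc i)))"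
    using m1 unfolding mchain_def by blast
  obtain n2 T2 where T2: "T2 0 = B2" "T2 n2 = carrier A" "\<forall>i\<le>n2. subgroup (T2 i) A"
      "\<forall>i<n2. T2 i \<subseteq> T2 (Suc i) \<and> (noeth_between A (T2 i) (T2 (Suc i)) \<or> art_between A (T2 i) (T2 (Suc i)))"
    using m2 unfolding mchain_def by blast
  have B1c: "B1 \<subseteq> carrier A" using B1 subgroup.subset by blast
  define T where "T i = (if i \<le> n2 then B1 \<inter> T2 i else T1 (i - n2))" for i
  have Thi: "T i = T1 (i - n2)" if "i \<ge> n2" for i
  proof (cases "i = n2")
    case True then show ?thesis unfolding T_def using T2(2) T1(1) B1c by auto
  next
    case False then show ?thesis unfolding T_def using that by auto
  qed
  have "T 0 = B1 \<inter> B2" unfolding T_def using T2(1) by simp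
  moreover have "T (n2 + n1) = carrier A" using Thi[of "n2+n1"] T1(2) by simp
  moreover have "\<forall>i\<le>n2+n1. subgroup (T i) A"
  proof (intro allI impI)
    fix i assume i: "i \<le> n2 + n1"
    show "subgroup (T i) A"
    proof (cases "i \<le> n2")
      case True then show ?thesis unfolding T_def using T2(3) subgroup_Int[OF B1] by simp
    next
      case False then show ?thesis using Thi[of i] T1(3) i by simp
    qed
  qed
  moreover have "\<forall>i<n2+n1. T i \<subseteq> T (Suc i) \<and> (noeth_between A (T i) (T (Suc i)) \<or> art_between A (T i) (T (Suc i)))"
  proof (intro allI impI)
    fix i assume i: "i < n2 + n1"
    show "T i \<subseteq> T (Suc i) \<and> (noeth_between A (T i) (T (Suc i)) \<or> art_between A (T i) (T (Suc i)))"
    proof (cases "i < n2")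
      case True
      have s: "subgroup (T2 i) A" "subgroup (T2 (Suc i)) A" "T2 i \<subseteq> T2 (Suc i)" using T2(3,4) True by auto
      have e: "T i = B1 \<inter> T2 i" "T (Suc i) = B1 \<inter> T2 (Suc i)" unfolding T_def using True by auto
      show ?thesis unfolding e using int_interval[OF A B1 s] T2(4) True s(3) by blast
    next
      case False
      then have "Suc i - n2 = Suc (i - n2)" by simp
      then have e: "T i = T1 (i - n2)" "T (Suc i) = T1 (Suc (i - n2))" using Thi[of i] Thi[of "Suc i"] False by auto
      have "i - n2 < n1" using i False by simp
      then show ?thesis unfolding e using T1(4) by blast
    qed
  qed
  ultimately show ?thesis unfolding mchain_def by blast
qed




lemma act_hom:
  assumes M: "ZG_module G A act" and g: "g \<in> carrier G"
  shows "act g \<in> hom A A"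
  using M g unfolding ZG_module_def hom_def by auto

lemma act_surj:
  assumes M: "ZG_module G A act" and g: "g \<in> carrier G"
  shows "act g ` carrier A = carrier A"
proof -
  interpret G: group G using M unfolding ZG_module_def by blast
  have c: "\<And>a. a \<in> carrier A \<Longrightarrow> act g a \<in> carrier A" using M g unfolding ZG_module_def by blast
  have "a \<in> act g ` carrier A" if a: "a \<in> carrier A" for a
  proof -
    have "act (inv\<^bsub>G\<^esub> g) a \<in> carrier A" using M g a unfolding ZG_module_def by auto
    moreover have "act g (act (inv\<^bsub>G\<^esub> g) a) = a"
      using M g a unfolding ZG_module_def by (metis G.inv_closed G.r_inv)
    ultimately show ?thesis by (metis image_eqI)
  qed
  then show ?thesis using c by blast
qed

lemma id_hom_self: "group A \<Longrightarrow> id \<in> hom A A"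
  unfolding hom_def by auto

lemma cz_subgroup:
  assumes M: "ZG_module G A act" and H: "H \<subseteq> carrier G"
  shows "subgroup (centralizer_in_module A act H) A"
proof -
  interpret A: comm_group A using M unfolding ZG_module_def by blast
  have gh: "group_hom A A (act h)" if "h \<in> carrier G" for h
    using act_hom[OF M that] A.is_group by (simp add: group_hom_def group_hom_axioms_def)
  show ?thesis
  proof (rule A.subgroupI)
    show "centralizer_in_module A act H \<subseteq> carrier A" unfolding centralizer_in_module_def by blast
    show "centralizer_in_module A act H \<noteq> {}"
      unfolding centralizer_in_module_def using group_hom.hom_one[OF gh] H by auto
  next
    fix a assume "a \<in> centralizer_in_module A act H"
    then show "inv\<^bsub>A\<^esub> a \<in> centralizer_in_module A act H"
      unfolding centralizer_in_module_def using group_hom.hom_inv[OF gh] H by auto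
  next
    fix a b assume "a \<in> centralizer_in_module A act H" "b \<in> centralizer_in_module A act H"
    then show "a \<otimes>\<^bsub>A\<^esub> b \<in> centralizer_in_module A act H"
      unfolding centralizer_in_module_def using group_hom.hom_mult[OF gh] H by auto
  qed
qed

lemma mm_mono:
  assumes M: "ZG_module G A act" and H: "H \<subseteq> carrier G" and H': "H' \<subseteq> carrier G"
    and sub: "centralizer_in_module A act H \<subseteq> centralizer_in_module A act H'"
    and mm: "minimax (A Mod centralizer_in_module A act H)"
  shows "minimax (A Mod centralizer_in_module A act H')"
proof -
  have A: "comm_group A" using M unfolding ZG_module_def by blast
  have "mchain A (centralizer_in_module A act H)"
    using mm minimax_iff_mchain[OF A cz_subgroup[OF M H]] by simp
  then have "mchain A (centralizer_in_module A act H')"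
    using mchain_img[OF A id_hom_self[OF comm_group.axioms(2)[OF A]] _ cz_subgroup[OF M H'] _] sub by auto
  then show ?thesis using minimax_iff_mchain[OF A cz_subgroup[OF M H']] by simp
qed

lemma Coc_normal:
  assumes M: "ZG_module G A act"
  shows "Coc_mmx G A act \<lhd> G"
proof -
  interpret G: group G using M unfolding ZG_module_def by blast
  have A: "comm_group A" using M unfolding ZG_module_def by blast
  interpret A: comm_group A by fact
  let ?C = "\<lambda>x. centralizer_in_module A act {x}"
  have actc: "\<And>g a. g \<in> carrier G \<Longrightarrow> a \<in> carrier A \<Longrightarrow> act g a \<in> carrier A"
    and act1: "\<And>a. a \<in> carrier A \<Longrightarrow> act \<one>\<^bsub>G\<^esub> a = a"
    and actm: "\<And>g h a. g \<in> carrier G \<Longrightarrow> h \<in> carrier G \<Longrightarrow> a \<in> carrier A \<Longrightarrow>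
                 act (g \<otimes>\<^bsub>G\<^esub> h) a = act g (act h a)"
    using M unfolding ZG_module_def by auto
  have sg: "subgroup (?C x) A" if "x \<in> carrier G" for x using cz_subgroup[OF M] that by simp
  have mc: "x \<in> Coc_mmx G A act \<longleftrightarrow> x \<in> carrier G \<and> mchain A (?C x)" for x
    unfolding Coc_mmx_def using minimax_iff_mchain[OF A sg] by auto
  have sub: "subgroup (Coc_mmx G A act) G"
  proof (rule G.subgroupI)
    show "Coc_mmx G A act \<subseteq> carrier G" unfolding Coc_mmx_def by blast
    have "?C \<one>\<^bsub>G\<^esub> = carrier A" unfolding centralizer_in_module_def using act1 by auto
    moreover have "mchain A (carrier A)"
      unfolding mchain_def by (rule exI[of _ 0], rule exI[of _ "\<lambda>_. carrier A"]) (simp add: A.subgroup_self)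
    ultimately have "\<one>\<^bsub>G\<^esub> \<in> Coc_mmx G A act" using mc by simp
    then show "Coc_mmx G A act \<noteq> {}" by blast
  next
    fix x assume x: "x \<in> Coc_mmx G A act"
    then have xc: "x \<in> carrier G" and m: "mchain A (?C x)" using mc by auto
    have "?C x \<subseteq> ?C (inv\<^bsub>G\<^esub> x)"
    proof
      fix a assume "a \<in> ?C x"
      then have a: "a \<in> carrier A" "act x a = a" unfolding centralizer_in_module_def by auto
      have "act (inv\<^bsub>G\<^esub> x) a = act (inv\<^bsub>G\<^esub> x) (act x a)" using a by simp
      also have "\<dots> = a" using actm[of "inv\<^bsub>G\<^esub> x" x a] a xc act1 by simp
      finally show "a \<in> ?C (inv\<^bsub>G\<^esub> x)" unfolding centralizer_in_module_def using a by simp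
    qed
    then have "mchain A (?C (inv\<^bsub>G\<^esub> x))"
      using mchain_img[OF A id_hom_self[OF A.is_group] _ sg[OF G.inv_closed[OF xc]] _ m] by auto
    then show "inv\<^bsub>G\<^esub> x \<in> Coc_mmx G A act" using mc xc by simp
  next
    fix x y assume x: "x \<in> Coc_mmx G A act" and y: "y \<in> Coc_mmx G A act"
    then have xc: "x \<in> carrier G" "mchain A (?C x)" and yc: "y \<in> carrier G" "mchain A (?C y)" using mc by auto
    have mi: "mchain A (?C x \<inter> ?C y)" using mchain_int[OF A sg[OF xc(1)] xc(2) yc(2)] .
    have "?C x \<inter> ?C y \<subseteq> ?C (x \<otimes>\<^bsub>G\<^esub> y)"
      unfolding centralizer_in_module_def using actm xc yc by auto
    then have "mchain A (?C (x \<otimes>\<^bsub>G\<^esub> y))"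
      using mchain_img[OF A id_hom_self[OF A.is_group] _ sg[OF G.m_closed[OF xc(1) yc(1)]] _ mi] by auto
    then show "x \<otimes>\<^bsub>G\<^esub> y \<in> Coc_mmx G A act" using mc xc yc by simp
  qed
  show ?thesis
  proof (rule G.normal_invI[OF sub])
    fix h x assume h: "h \<in> carrier G" and x: "x \<in> Coc_mmx G A act"
    then have xc: "x \<in> carrier G" and m: "mchain A (?C x)" using mc by auto
    have hxc: "h \<otimes>\<^bsub>G\<^esub> x \<otimes>\<^bsub>G\<^esub> inv\<^bsub>G\<^esub> h \<in> carrier G" using h xc by simp
    have "act h ` ?C x \<subseteq> ?C (h \<otimes>\<^bsub>G\<^esub> x \<otimes>\<^bsub>G\<^esub> inv\<^bsub>G\<^esub> h)"
    proof
      fix b assume "b \<in> act h ` ?C x"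
      then obtain a where a: "a \<in> carrier A" "act x a = a" "b = act h a"
        unfolding centralizer_in_module_def by auto
      have "act (h \<otimes>\<^bsub>G\<^esub> x \<otimes>\<^bsub>G\<^esub> inv\<^bsub>G\<^esub> h) b = act h (act x (act (inv\<^bsub>G\<^esub> h) (act h a)))"
        using a h xc actm actc by simp
      also have "act (inv\<^bsub>G\<^esub> h) (act h a) = a" using actm[of "inv\<^bsub>G\<^esub> h" h a] a h act1 by simp
      finally have "act (h \<otimes>\<^bsub>G\<^esub> x \<otimes>\<^bsub>G\<^esub> inv\<^bsub>G\<^esub> h) b = b" using a by simp
      then show "b \<in> ?C (h \<otimes>\<^bsub>G\<^esub> x \<otimes>\<^bsub>G\<^esub> inv\<^bsub>G\<^esub> h)"
        unfolding centralizer_in_module_def using a actc h by auto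
    qed
    then have "mchain A (?C (h \<otimes>\<^bsub>G\<^esub> x \<otimes>\<^bsub>G\<^esub> inv\<^bsub>G\<^esub> h))"
      using mchain_img[OF A act_hom[OF M h] act_surj[OF M h] sg[OF hxc] _ m] by auto
    then show "h \<otimes>\<^bsub>G\<^esub> x \<otimes>\<^bsub>G\<^esub> inv\<^bsub>G\<^esub> h \<in> Coc_mmx G A act" using mc hxc by simp
  qed
qed




context group begin

lemma coset_eq_self_iff:
  assumes N: "subgroup N G" and a: "a \<in> carrier G"
  shows "N #> a = N \<longleftrightarrow> a \<in> N"
proof
  assume "N #> a = N" then show "a \<in> N" using rcos_self[OF a N] by simp
next
  assume "a \<in> N" then show "N #> a = N" using coset_join2[OF a N] by simp
qed

lemma finite_rcosets_super:
  assumes H: "subgroup H G" and K: "subgroup K G" and HK: "H \<subseteq> K" and fin: "finite (rcosets H)"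
  shows "finite (rcosets K)"
proof -
  have "rcosets K \<subseteq> (\<lambda>Q0. \<Union>y\<in>Q0. K #> y) ` (rcosets H)"
  proof
    fix Y assume "Y \<in> rcosets K"
    then obtain a where a: "a \<in> carrier G" "Y = K #> a" unfolding RCOSETS_def by blast
    have "(\<Union>y\<in>H #> a. K #> y) = K #> a"
    proof
      show "(\<Union>y\<in>H #> a. K #> y) \<subseteq> K #> a"
      proof
        fix x assume "x \<in> (\<Union>y\<in>H #> a. K #> y)"
        then obtain y where y: "y \<in> H #> a" "x \<in> K #> y" by blast
        have "y \<in> K #> a" using y(1) HK unfolding r_coset_def by blast
        then have "K #> a = K #> y" using repr_independence[OF _ a(1) K] by blast
        then show "x \<in> K #> a" using y(2) by simp
      qed
      show "K #> a \<subseteq> (\<Union>y\<in>H #> a. K #> y)" using rcos_self[OF a(1) H] by blast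
    qed
    moreover have "H #> a \<in> rcosets H" using a(1) unfolding RCOSETS_def by blast
    ultimately show "Y \<in> (\<lambda>Q0. \<Union>y\<in>Q0. K #> y) ` (rcosets H)" using a(2) by (metis image_eqI)
  qed
  then show ?thesis using fin finite_surj by blast
qed

lemma fin_index_fg:
  assumes K: "subgroup K G" and fin: "finite (rcosets K)" and fg: "fin_gen_subgroup G K"
  shows "fin_gen_group G"
proof -
  obtain S where S: "finite S" "S \<subseteq> K" "generate G S = K" using fg unfolding fin_gen_subgroup_def by blast
  define rep where "rep Q0 = (SOME x. x \<in> Q0)" for Q0 :: "'a set"
  define R where "R = rep ` (rcosets K)"
  have Kc: "K \<subseteq> carrier G" using K subgroup.subset by blast
  have repm: "rep Q0 \<in> Q0" if Q0m: "Q0 \<in> rcosets K" for Q0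
  proof -
    obtain a where a: "a \<in> carrier G" "Q0 = K #> a" using Q0m by (auto simp: RCOSETS_def)
    have "a \<in> Q0" using rcos_self[OF a(1) K] a(2) by simp
    then show ?thesis unfolding rep_def by (rule someI)
  qed
  have Rc: "R \<subseteq> carrier G"
  proof
    fix r assume "r \<in> R"
    then obtain Q0 where Q0: "Q0 \<in> rcosets K" "r = rep Q0" unfolding R_def by blast
    obtain a where a: "a \<in> carrier G" "Q0 = K #> a" using Q0(1) by (auto simp: RCOSETS_def)
    show "r \<in> carrier G" using repm[OF Q0(1)] Q0(2) a r_coset_subset_G[OF Kc a(1)] by blast
  qed
  let ?S = "S \<union> R"
  have Sc: "?S \<subseteq> carrier G" using S(2) Kc Rc by blast
  have "generate G ?S = carrier G"
  proof
    show "generate G ?S \<subseteq> carrier G" using generate_incl[OF Sc] .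
    show "carrier G \<subseteq> generate G ?S"
    proof
      fix y assume y: "y \<in> carrier G"
      let ?Q0 = "K #> y"
      have Q0: "?Q0 \<in> rcosets K" using y unfolding RCOSETS_def by blast
      have r: "rep ?Q0 \<in> K #> y" using repm[OF Q0] .
      have rc: "rep ?Q0 \<in> carrier G" using r r_coset_subset_G[OF Kc y] by blast
      have "K #> y = K #> rep ?Q0" using repr_independence[OF r y K] .
      then have "y \<in> K #> rep ?Q0" using rcos_self[OF y K] by simp
      then obtain k where k: "k \<in> K" "y = k \<otimes> rep ?Q0" unfolding r_coset_def by blast
      have "k \<in> generate G ?S" using k(1) S(3) mono_generate[of S ?S] by blast
      moreover have "rep ?Q0 \<in> generate G ?S" using Q0 unfolding R_def by (blast intro: generate.incl)
      ultimately show "y \<in> generate G ?S" using k(2) generate.eng by metis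
    qed
  qed
  moreover have "finite ?S" using S(1) fin unfolding R_def by blast
  ultimately show ?thesis unfolding fin_gen_group_def using Sc by blast
qed

lemma pow_gen_mem:
  assumes g: "g \<in> carrier G"
  shows "g [^] (n * q :: int) \<in> generate G {g [^] n}"
proof -
  have e: "(g [^] n) [^] q = g [^] (n * q)" by (rule int_pow_pow[OF g])
  have "(g [^] n) [^] q \<in> generate G {g [^] n}" using generate_pow[of "g [^] n"] g by blast
  then show ?thesis using e by simp
qed

lemma cover:
  assumes N: "N \<lhd> G" and g: "g \<in> carrier G" and cG: "carrier G = N <#> generate G {g}"
    and y: "y \<in> carrier G"
  shows "\<exists>k::int. y \<in> N #> g [^] k"
proof -
  have "y \<in> N <#> generate G {g}" using y cG by simp
  then obtain c z where cz: "c \<in> N" "z \<in> generate G {g}" "y = c \<otimes> z" by (rule set_mult_memE)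
  obtain k where k: "z = g [^] (k::int)" using cz(2) generate_pow[OF g] by blast
  have "y \<in> N #> g [^] k" using cz k rcosI[of c N "g [^] k"] normal_imp_subgroup[OF N] subgroup.subset g by auto
  then show ?thesis by blast
qed

lemma Kn_finite:
  assumes N: "N \<lhd> G" and g: "g \<in> carrier G" and cG: "carrier G = N <#> generate G {g}"
    and n: "n > (0::int)"
  shows "finite (rcosets (N <#> generate G {g [^] n}))"
proof -
  let ?K = "N <#> generate G {g [^] n}"
  have Nsg: "subgroup N G" using normal_imp_subgroup[OF N] .
  have Ksg: "subgroup ?K G"
    by (rule mult_norm_subgroup[OF N generate_is_subgroup]) (use g in simp)
  have Kc: "?K \<subseteq> carrier G" using Ksg subgroup.subset by blast
  have "rcosets ?K \<subseteq> (\<lambda>r. ?K #> g [^] r) ` {0..<n}"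
  proof
    fix Y assume "Y \<in> rcosets ?K"
    then obtain y where y: "y \<in> carrier G" "Y = ?K #> y" unfolding RCOSETS_def by blast
    obtain k where k: "y \<in> N #> g [^] (k::int)" using cover[OF N g cG y(1)] by blast
    then obtain c where c: "c \<in> N" "y = c \<otimes> g [^] k" unfolding r_coset_def by blast
    define q where "q = k div n"
    define r where "r = k mod n"
    have kqr: "k = n * q + r" unfolding q_def r_def by simp
    have r0: "0 \<le> k mod n" "k mod n < n" using n by (rule pos_mod_sign, rule pos_mod_bound)
    have r: "r \<in> {0..<n}" unfolding r_def using r0 by (rule atLeastLessThan_iff[THEN iffD2, OF conjI])
    have cc: "c \<in> carrier G" by (rule subgroup.mem_carrier[OF Nsg c(1)])
    have "y = (c \<otimes> g [^] (n * q)) \<otimes> g [^] r"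
    proof -
      have "g [^] k = g [^] (n * q) \<otimes> g [^] r" unfolding kqr by (rule int_pow_mult[OF g])
      then have "y = c \<otimes> (g [^] (n * q) \<otimes> g [^] r)" using c(2) by simp
      then show ?thesis using cc g by (simp add: m_assoc)
    qed
    moreover have "c \<otimes> g [^] (n * q) \<in> ?K"
      by (rule set_mult_mem[OF c(1) pow_gen_mem[OF g]])
    ultimately have "y \<in> ?K #> g [^] r" using rcosI[OF _ Kc] g by simp
    then have "?K #> g [^] r = ?K #> y" using repr_independence[OF _ _ Ksg] g by simp
    then show "Y \<in> (\<lambda>r. ?K #> g [^] r) ` {0..<n}" using r y(2) by (metis image_eqI)
  qed
  then show ?thesis using finite_subset by blast
qed

lemma in_Kn:
  assumes N: "N \<lhd> G" and g: "g \<in> carrier G" and gK: "g \<in> N <#> generate G {g [^] n}"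
  shows "\<exists>q::int. g [^] (1 - n * q) \<in> N"
proof -
  obtain c z where cz: "c \<in> N" "z \<in> generate G {g [^] n}" "g = c \<otimes> z" using gK by (rule set_mult_memE)
  obtain q where q: "z = (g [^] n) [^] (q::int)" using cz(2) generate_pow[of "g [^] n"] g by auto
  have z: "z = g [^] (n * q)" using q int_pow_pow[OF g] by simp
  have cc: "c \<in> carrier G" by (rule subgroup.mem_carrier[OF normal_imp_subgroup[OF N] cz(1)])
  have zc: "z \<in> carrier G" using z g by simp
  have "g \<otimes> inv z = c \<otimes> z \<otimes> inv z" using cz(3) by simp
  also have "\<dots> = c" using cc zc by (simp add: m_assoc)
  finally have "c = g \<otimes> inv (g [^] (n * q))" using z by simp
  also have "\<dots> = g [^] (1 - n * q)" using int_pow_diff[OF g, of 1 "n * q"] g by simp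
  finally show ?thesis using cz(1) by auto
qed

end




lemma sub_coc:
  assumes AF: "minimax_antifinitary G A act" and nfg: "\<not> fin_gen_group G"
    and K: "subgroup K G" and KG: "K \<noteq> carrier G" and fin: "finite (rcosets\<^bsub>G\<^esub> K)"
  shows "K \<subseteq> Coc_mmx G A act"
proof -
  have M: "ZG_module G A act" using AF unfolding minimax_antifinitary_def by blast
  interpret G: group G using M unfolding ZG_module_def by blast
  have Kc: "K \<subseteq> carrier G" using K subgroup.subset by blast
  have "\<not> fin_gen_subgroup G K" using G.fin_index_fg[OF K fin] nfg by blast
  then have mm: "minimax (A Mod centralizer_in_module A act K)"
    using AF K KG unfolding minimax_antifinitary_def by blast
  show ?thesis
  proof
    fix x assume x: "x \<in> K"
    then have xc: "x \<in> carrier G" using Kc by blast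
    have "centralizer_in_module A act K \<subseteq> centralizer_in_module A act {x}"
      unfolding centralizer_in_module_def using x by blast
    then have "minimax (A Mod centralizer_in_module A act {x})"
      using mm_mono[OF M Kc _ _ mm] xc by simp
    then show "x \<in> Coc_mmx G A act" unfolding Coc_mmx_def using xc by simp
  qed
qed

lemma prime_power_of:
  fixes n p :: nat
  assumes "n \<ge> 1" and "\<And>q. Factorial_Ring.prime q \<Longrightarrow> q dvd n \<Longrightarrow> q = p"
  shows "\<exists>k. n = p ^ k"
  using assms
proof (induction n rule: less_induct)
  case (less n)
  show ?case
  proof (cases "n = 1")
    case True then show ?thesis by (metis power_0)
  next
    case False
    then obtain q where q: "Factorial_Ring.prime q" "q dvd n" using prime_factor_nat by blast
    have qp: "q = p" using less.prems(2) q by blast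
    obtain n' where n': "n = p * n'" using q(2) qp by (auto elim: dvdE)
    have p1: "p > 1" using q(1) qp prime_gt_1_nat by blast
    have n'1: "n' \<ge> 1" using n' less.prems(1) by (cases n') auto
    have "n' < n" using n' p1 n'1 by simp
    moreover have "\<And>q. Factorial_Ring.prime q \<Longrightarrow> q dvd n' \<Longrightarrow> q = p"
    proof -
      fix q :: nat assume "Factorial_Ring.prime q" "q dvd n'"
      moreover have "q dvd n" using \<open>q dvd n'\<close> n' by simp
      ultimately show "q = p" using less.prems(2) by blast
    qed
    ultimately obtain k where "n' = p ^ k" using less.IH n'1 by blast
    then have "n = p ^ Suc k" using n' by simp
    then show ?thesis by blast
  qed
qed

lemma set_mult_absorb:
  assumes "group G" "subgroup C G" "S \<subseteq> C" "\<one>\<^bsub>G\<^esub> \<in> S"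
  shows "C <#>\<^bsub>G\<^esub> S = C"
proof
  show "C <#>\<^bsub>G\<^esub> S \<subseteq> C"
  proof
    fix y assume "y \<in> C <#>\<^bsub>G\<^esub> S"
    then obtain a b where ab: "a \<in> C" "b \<in> S" "y = a \<otimes>\<^bsub>G\<^esub> b" by (rule set_mult_memE)
    then show "y \<in> C" using assms(3) subgroup.m_closed[OF assms(2)] by blast
  qed
  show "C \<subseteq> C <#>\<^bsub>G\<^esub> S"
  proof
    fix c assume c: "c \<in> C"
    have "c \<otimes>\<^bsub>G\<^esub> \<one>\<^bsub>G\<^esub> \<in> C <#>\<^bsub>G\<^esub> S" by (rule set_mult_mem[OF c assms(4)])
    then show "c \<in> C <#>\<^bsub>G\<^esub> S" using c subgroup.mem_carrier[OF assms(2) c] group.is_monoid[OF assms(1)]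
      by (simp add: monoid.r_one)
  qed
qed




theorem corollary3p3:
  fixes G :: "('g, 'c) monoid_scheme" and A :: "('a, 'd) monoid_scheme"
    and act :: "'g \<Rightarrow> 'a \<Rightarrow> 'a" and g :: 'g and H :: "'g set"
  assumes "group G"
    and "locally_generalized_radical G"
    and "minimax_antifinitary G A act"
    and "Coc_mmx G A act \<noteq> carrier G"
    and "\<not> fin_gen_group G"
    and "fin_gen_group (G Mod Coc_mmx G A act)"
    and "g \<in> carrier G"
    and "carrier G = generate G {g} <#>\<^bsub>G\<^esub> Coc_mmx G A act"
    and "H \<lhd> G"
    and "finite (rcosets\<^bsub>G\<^esub> H)"
  shows "H <#>\<^bsub>G\<^esub> generate G {g} = carrier G
    \<and> Factorial_Ring.prime (card (rcosets\<^bsub>G\<^esub> Coc_mmx G A act))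
    \<and> (\<forall>x\<in>carrier (G Mod H). \<exists>k::nat.
          group.ord (G Mod H) x = card (rcosets\<^bsub>G\<^esub> Coc_mmx G A act) ^ k)"
proof -
  interpret G: group G by fact
  have AF: "minimax_antifinitary G A act" by fact
  have M: "ZG_module G A act" using AF unfolding minimax_antifinitary_def by blast
  have g: "g \<in> carrier G" by fact
  have HN: "H \<lhd> G" by fact
  have Hsg: "subgroup H G" using normal_imp_subgroup[OF HN] .
  define C where "C = Coc_mmx G A act"
  define Z where "Z = generate G {g}"
  have CN: "C \<lhd> G" unfolding C_def by (rule Coc_normal[OF M])
  have Csg: "subgroup C G" using normal_imp_subgroup[OF CN] .
  have CG: "C \<noteq> carrier G" unfolding C_def by fact
  have Zsg: "subgroup Z G" unfolding Z_def by (rule G.generate_is_subgroup) (use g in simp)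
  have L: "K \<subseteq> C" if "subgroup K G" "K \<noteq> carrier G" "finite (rcosets\<^bsub>G\<^esub> K)" for K
    unfolding C_def using sub_coc[OF AF assms(5) that] .
  have gZ: "g \<in> Z" unfolding Z_def by (rule generate.incl) simp
  have cZC: "carrier G = Z <#>\<^bsub>G\<^esub> C" using assms(8) unfolding Z_def C_def .
  have cCZ: "carrier G = C <#>\<^bsub>G\<^esub> Z" using cZC G.commut_normal[OF Zsg CN] by simp
  have gC: "g \<notin> C"
  proof
    assume gc: "g \<in> C"
    have "Z \<subseteq> C" unfolding Z_def by (rule G.generate_subgroup_incl) (use gc Csg in auto)
    have "carrier G \<subseteq> C"
    proof
      fix y assume "y \<in> carrier G"
      then have "y \<in> Z <#>\<^bsub>G\<^esub> C" using cZC by simp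
      then obtain a b where ab: "a \<in> Z" "b \<in> C" "y = a \<otimes>\<^bsub>G\<^esub> b" by (rule set_mult_memE)
      then show "y \<in> C" using \<open>Z \<subseteq> C\<close> subgroup.m_closed[OF Csg] by blast
    qed
    then show False using CG subgroup.subset[OF Csg] by blast
  qed
  define Q where "Q = G Mod C"
  define x where "x = C #>\<^bsub>G\<^esub> g"
  have Qg: "group Q" unfolding Q_def by (rule normal.factorgroup_is_group[OF CN])
  have xQ: "x \<in> carrier Q" unfolding Q_def x_def using g by (auto simp: FactGroup_def RCOSETS_def)
  have powx: "x [^]\<^bsub>Q\<^esub> k = C #>\<^bsub>G\<^esub> (g [^]\<^bsub>G\<^esub> k)" for k :: int
    unfolding Q_def x_def FactGroup_def[symmetric] by (rule normal.FactGroup_int_pow[OF CN g])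
  have one_iff: "x [^]\<^bsub>Q\<^esub> k = \<one>\<^bsub>Q\<^esub> \<longleftrightarrow> g [^]\<^bsub>G\<^esub> k \<in> C" for k :: int
  proof -
    have "g [^]\<^bsub>G\<^esub> k \<in> carrier G" using g by simp
    then show ?thesis using powx[of k] G.coset_eq_self_iff[OF Csg] unfolding Q_def by simp
  qed
  have dich: "g [^]\<^bsub>G\<^esub> n \<in> C \<or> (\<exists>q::int. g [^]\<^bsub>G\<^esub> (1 - n * q) \<in> C)" if n: "n > (0::int)" for n
  proof -
    let ?K = "C <#>\<^bsub>G\<^esub> generate G {g [^]\<^bsub>G\<^esub> n}"
    have Ksg: "subgroup ?K G"
      by (rule G.mult_norm_subgroup[OF CN G.generate_is_subgroup]) (use g in simp)
    have fin: "finite (rcosets\<^bsub>G\<^esub> ?K)" using G.Kn_finite[OF CN g _ n] cCZ unfolding Z_def by simp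
    show ?thesis
    proof (cases "?K = carrier G")
      case True
      then have "g \<in> ?K" using g by simp
      then show ?thesis using G.in_Kn[OF CN g] by blast
    next
      case False
      then have "?K \<subseteq> C" using L[OF Ksg _ fin] by blast
      moreover have "g [^]\<^bsub>G\<^esub> n \<in> ?K"
      proof -
        have "\<one>\<^bsub>G\<^esub> \<otimes>\<^bsub>G\<^esub> g [^]\<^bsub>G\<^esub> n \<in> ?K"
          by (rule set_mult_mem[OF subgroup.one_closed[OF Csg] generate.incl]) simp
        then show ?thesis using g by simp
      qed
      ultimately show ?thesis by blast
    qed
  qed
  have exm: "\<exists>m::int. m > 0 \<and> g [^]\<^bsub>G\<^esub> m \<in> C"
  proof -
    have "g [^]\<^bsub>G\<^esub> (2::int) \<in> C \<or> (\<exists>q::int. g [^]\<^bsub>G\<^esub> (1 - 2 * q) \<in> C)" using dich[of 2] by simp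
    then show ?thesis
    proof
      assume "g [^]\<^bsub>G\<^esub> (2::int) \<in> C" then show ?thesis by (intro exI[of _ 2]) simp
    next
      assume "\<exists>q::int. g [^]\<^bsub>G\<^esub> (1 - 2 * q) \<in> C"
      then obtain q :: int where q: "g [^]\<^bsub>G\<^esub> (1 - 2 * q) \<in> C" by blast
      have "1 - 2 * q \<noteq> 0" by presburger
      show ?thesis
      proof (cases "1 - 2 * q > 0")
        case True then show ?thesis using q by blast
      next
        case False
        then have pos: "- (1 - 2 * q) > 0" using \<open>1 - 2 * q \<noteq> 0\<close> by simp
        have "g [^]\<^bsub>G\<^esub> (- (1 - 2 * q)) = inv\<^bsub>G\<^esub> (g [^]\<^bsub>G\<^esub> (1 - 2 * q))" by (rule G.int_pow_neg[OF g])
        then have "g [^]\<^bsub>G\<^esub> (- (1 - 2 * q)) \<in> C" using q subgroup.m_inv_closed[OF Csg] by simp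
        then show ?thesis using pos by blast
      qed
    qed
  qed
  have finC: "finite (rcosets\<^bsub>G\<^esub> C)"
  proof -
    obtain m :: int where m: "m > 0" "g [^]\<^bsub>G\<^esub> m \<in> C" using exm by blast
    have "generate G {g [^]\<^bsub>G\<^esub> m} \<subseteq> C"
      by (rule G.generate_subgroup_incl) (use m Csg in auto)
    then have "C <#>\<^bsub>G\<^esub> generate G {g [^]\<^bsub>G\<^esub> m} = C"
      by (rule set_mult_absorb[OF G.is_group Csg]) (rule generate.one)
    then show ?thesis using G.Kn_finite[OF CN g _ m(1)] cCZ unfolding Z_def by simp
  qed
  have finQ: "finite (carrier Q)" unfolding Q_def using finC by (simp add: FactGroup_def)
  define m where "m = group.ord Q x"
  have ord_iff: "g [^]\<^bsub>G\<^esub> k \<in> C \<longleftrightarrow> int m dvd k" for k :: int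
    using one_iff[of k] group.int_pow_eq_id[OF Qg xQ, of k] unfolding m_def by simp
  have genQ: "carrier Q = generate Q {x}"
  proof
    show "generate Q {x} \<subseteq> carrier Q" by (rule group.generate_incl[OF Qg]) (use xQ in simp)
    show "carrier Q \<subseteq> generate Q {x}"
    proof
      fix Y assume "Y \<in> carrier Q"
      then obtain y where y: "y \<in> carrier G" "Y = C #>\<^bsub>G\<^esub> y" unfolding Q_def by (auto simp: FactGroup_def RCOSETS_def)
      obtain k :: int where k: "y \<in> C #>\<^bsub>G\<^esub> g [^]\<^bsub>G\<^esub> k" using G.cover[OF CN g cCZ[unfolded Z_def] y(1)] by blast
      have "C #>\<^bsub>G\<^esub> g [^]\<^bsub>G\<^esub> k = C #>\<^bsub>G\<^esub> y" using G.repr_independence[OF k _ Csg] g by simp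
      then have "Y = x [^]\<^bsub>Q\<^esub> k" using powx[of k] y(2) by simp
      then show "Y \<in> generate Q {x}" using group.generate_pow[OF Qg xQ] by blast
    qed
  qed
  have cardC: "card (rcosets\<^bsub>G\<^esub> C) = m"
  proof -
    have "card (rcosets\<^bsub>G\<^esub> C) = card (carrier Q)" unfolding Q_def by (simp add: FactGroup_def)
    also have "\<dots> = card (generate Q {x})" using genQ by simp
    also have "\<dots> = m" unfolding m_def using group.generate_pow_card[OF Qg xQ] by simp
    finally show ?thesis .
  qed
  have m1: "m \<ge> 1" unfolding m_def by (rule group.ord_ge_1[OF Qg finQ xQ])
  have mne1: "m \<noteq> 1"
  proof
    assume "m = 1"
    then have "g [^]\<^bsub>G\<^esub> (1::int) \<in> C" using ord_iff[of 1] by simp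
    then show False using gC g by simp
  qed
  have pf: "q = m" if q: "Factorial_Ring.prime q" "q dvd m" for q
  proof -
    have q2: "int q > 0" using prime_gt_0_nat[OF q(1)] by simp
    from dich[OF q2] show ?thesis
    proof
      assume "g [^]\<^bsub>G\<^esub> (int q) \<in> C"
      then have "m dvd q" using ord_iff by simp
      then show "q = m" using prime_nat_iff[THEN iffD1, OF q(1)] mne1 by blast
    next
      assume "\<exists>j::int. g [^]\<^bsub>G\<^esub> (1 - int q * j) \<in> C"
      then obtain j :: int where "g [^]\<^bsub>G\<^esub> (1 - int q * j) \<in> C" by blast
      then have "int m dvd 1 - int q * j" using ord_iff by simp
      then have "int q dvd 1 - int q * j" using q(2) by (meson dvd_trans int_dvd_int_iff)
      then have "int q dvd (1 - int q * j) + int q * j" by (rule dvd_add) simp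
      then have "int q dvd 1" by simp
      then show "q = m" using q(1) by (simp add: prime_nat_iff)
    qed
  qed
  have pm: "Factorial_Ring.prime m"
  proof -
    obtain q where "Factorial_Ring.prime q" "q dvd m" using prime_factor_nat[OF mne1] by blast
    then show ?thesis using pf by metis
  qed
  have g1: "H <#>\<^bsub>G\<^esub> Z = carrier G"
  proof (rule ccontr)
    assume ne: "H <#>\<^bsub>G\<^esub> Z \<noteq> carrier G"
    have Ksg: "subgroup (H <#>\<^bsub>G\<^esub> Z) G" by (rule G.mult_norm_subgroup[OF HN Zsg])
    have HK: "H \<subseteq> H <#>\<^bsub>G\<^esub> Z"
    proof
      fix h assume h: "h \<in> H"
      have "h \<otimes>\<^bsub>G\<^esub> \<one>\<^bsub>G\<^esub> \<in> H <#>\<^bsub>G\<^esub> Z" by (rule set_mult_mem[OF h subgroup.one_closed[OF Zsg]])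
      then show "h \<in> H <#>\<^bsub>G\<^esub> Z" using subgroup.mem_carrier[OF Hsg h] by simp
    qed
    have fin: "finite (rcosets\<^bsub>G\<^esub> (H <#>\<^bsub>G\<^esub> Z))" by (rule G.finite_rcosets_super[OF Hsg Ksg HK assms(10)])
    have "H <#>\<^bsub>G\<^esub> Z \<subseteq> C" by (rule L[OF Ksg ne fin])
    moreover have "g \<in> H <#>\<^bsub>G\<^esub> Z"
    proof -
      have "\<one>\<^bsub>G\<^esub> \<otimes>\<^bsub>G\<^esub> g \<in> H <#>\<^bsub>G\<^esub> Z" by (rule set_mult_mem[OF subgroup.one_closed[OF Hsg] gZ])
      then show ?thesis using g by simp
    qed
    ultimately show False using gC by blast
  qed
  define Q' where "Q' = G Mod H"
  define z where "z = H #>\<^bsub>G\<^esub> g"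
  have Q'g: "group Q'" unfolding Q'_def by (rule normal.factorgroup_is_group[OF HN])
  have zQ: "z \<in> carrier Q'" unfolding Q'_def z_def using g by (auto simp: FactGroup_def RCOSETS_def)
  have finQ': "finite (carrier Q')" unfolding Q'_def using assms(10) by (simp add: FactGroup_def)
  have powz: "z [^]\<^bsub>Q'\<^esub> k = H #>\<^bsub>G\<^esub> (g [^]\<^bsub>G\<^esub> k)" for k :: int
    unfolding Q'_def z_def FactGroup_def[symmetric] by (rule normal.FactGroup_int_pow[OF HN g])
  have one_iff': "z [^]\<^bsub>Q'\<^esub> k = \<one>\<^bsub>Q'\<^esub> \<longleftrightarrow> g [^]\<^bsub>G\<^esub> k \<in> H" for k :: int
  proof -
    have "g [^]\<^bsub>G\<^esub> k \<in> carrier G" using g by simp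
    then show ?thesis using powz[of k] G.coset_eq_self_iff[OF Hsg] unfolding Q'_def by simp
  qed
  define mz where "mz = group.ord Q' z"
  have ordz_iff: "g [^]\<^bsub>G\<^esub> k \<in> H \<longleftrightarrow> int mz dvd k" for k :: int
    using one_iff'[of k] group.int_pow_eq_id[OF Q'g zQ, of k] unfolding mz_def by simp
  have cHZ: "carrier G = H <#>\<^bsub>G\<^esub> Z" using g1 by simp
  have pfz: "q = m" if q: "Factorial_Ring.prime q" "q dvd mz" for q
  proof -
    have q2: "int q > 0" using prime_gt_0_nat[OF q(1)] by simp
    let ?K = "H <#>\<^bsub>G\<^esub> generate G {g [^]\<^bsub>G\<^esub> int q}"
    have Ksg: "subgroup ?K G"
      by (rule G.mult_norm_subgroup[OF HN G.generate_is_subgroup]) (use g in simp)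
    have HK: "H \<subseteq> ?K"
    proof
      fix h assume h: "h \<in> H"
      have "h \<otimes>\<^bsub>G\<^esub> \<one>\<^bsub>G\<^esub> \<in> ?K" by (rule set_mult_mem[OF h generate.one])
      then show "h \<in> ?K" using subgroup.mem_carrier[OF Hsg h] by simp
    qed
    have fin: "finite (rcosets\<^bsub>G\<^esub> ?K)" by (rule G.finite_rcosets_super[OF Hsg Ksg HK assms(10)])
    show ?thesis
    proof (cases "?K = carrier G")
      case True
      then have "g \<in> ?K" using g by simp
      then obtain j :: int where "g [^]\<^bsub>G\<^esub> (1 - int q * j) \<in> H" using G.in_Kn[OF HN g] by blast
      then have "int mz dvd 1 - int q * j" using ordz_iff by simp
      then have "int q dvd 1 - int q * j" using q(2) by (meson dvd_trans int_dvd_int_iff)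
      then have "int q dvd (1 - int q * j) + int q * j" by (rule dvd_add) simp
      then have "int q dvd 1" by simp
      then show "q = m" using q(1) by (simp add: prime_nat_iff)
    next
      case False
      then have "?K \<subseteq> C" using L[OF Ksg _ fin] by blast
      moreover have "g [^]\<^bsub>G\<^esub> (int q) \<in> ?K"
      proof -
        have "\<one>\<^bsub>G\<^esub> \<otimes>\<^bsub>G\<^esub> g [^]\<^bsub>G\<^esub> (int q) \<in> ?K"
          by (rule set_mult_mem[OF subgroup.one_closed[OF Hsg] generate.incl]) simp
        then show ?thesis using g by simp
      qed
      ultimately have "g [^]\<^bsub>G\<^esub> (int q) \<in> C" by blast
      then have "m dvd q" using ord_iff by simp
      then show "q = m" using prime_nat_iff[THEN iffD1, OF q(1)] mne1 by blast
    qed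
  qed
  have g3: "\<forall>y\<in>carrier Q'. \<exists>k::nat. group.ord Q' y = m ^ k"
  proof
    fix Y assume YQ: "Y \<in> carrier Q'"
    then obtain y where y: "y \<in> carrier G" "Y = H #>\<^bsub>G\<^esub> y" unfolding Q'_def by (auto simp: FactGroup_def RCOSETS_def)
    obtain k :: int where k: "y \<in> H #>\<^bsub>G\<^esub> g [^]\<^bsub>G\<^esub> k" using G.cover[OF HN g cHZ[unfolded Z_def] y(1)] by blast
    have "H #>\<^bsub>G\<^esub> g [^]\<^bsub>G\<^esub> k = H #>\<^bsub>G\<^esub> y" using G.repr_independence[OF k _ Hsg] g by simp
    then have Yk: "Y = z [^]\<^bsub>Q'\<^esub> k" using powz[of k] y(2) by simp
    have zmz: "z [^]\<^bsub>Q'\<^esub> (int mz) = \<one>\<^bsub>Q'\<^esub>" using group.int_pow_eq_id[OF Q'g zQ] unfolding mz_def by simp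
    have "Y [^]\<^bsub>Q'\<^esub> (int mz) = z [^]\<^bsub>Q'\<^esub> (k * int mz)" using Yk group.int_pow_pow[OF Q'g zQ] by simp
    also have "\<dots> = (z [^]\<^bsub>Q'\<^esub> (int mz)) [^]\<^bsub>Q'\<^esub> k"
      using group.int_pow_pow[OF Q'g zQ, of "int mz" k] by (simp add: mult.commute)
    also have "\<dots> = \<one>\<^bsub>Q'\<^esub>" using zmz group.int_pow_one[OF Q'g] by simp
    finally have "int (group.ord Q' Y) dvd int mz" using group.int_pow_eq_id[OF Q'g YQ] by simp
    then have dv: "group.ord Q' Y dvd mz" by simp
    have "group.ord Q' Y \<ge> 1" by (rule group.ord_ge_1[OF Q'g finQ' YQ])
    moreover have "\<And>q. Factorial_Ring.prime q \<Longrightarrow> q dvd group.ord Q' Y \<Longrightarrow> q = m"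
      using pfz dv dvd_trans by blast
    ultimately show "\<exists>k::nat. group.ord Q' Y = m ^ k" by (rule prime_power_of)
  qed
  show ?thesis
    using g1 pm cardC g3 unfolding Z_def C_def Q'_def by simp
qed


end
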